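(* For every parsummable category $\mathcal C$ (and the fixed injection $\phi\colon\omega\times\omega\to\omega$), the functor $S_{\mathcal C}\colon\Theta(\mathcal C)\to\mathcal C$ is an equivalence of categories. For varying $\mathcal C$, these functors form a natural transformation $\mathrm{forget}\circ\Theta\Rightarrow\mathrm{forget}$ of functors $\mathbf{ParSumCat}\to\mathbf{Cat}$, i.e. $S_{\mathcal D}\circ\Theta(F)=F\circ S_{\mathcal C}$ for every morphism $F\colon\mathcal C\to\mathcal D$ of parsummable categories.
   Context: Let $\omega=\{1,2,\dots\}$, $\mathbf m=\{1,\dots,m\}$, $\mathcal M$ the monoid of injections $\omega\to\omega$. A parsummable category is a small $E\mathcal M$-category (strict action of the chaotic category on $\mathcal M$; $u_*$ the action, $[v,u]\colon u_*\Rightarrow v_*$) all of whose objects have finite support (intersection of finite $A\subset\omega$ with $u_*X=X$ for all $u$ fixing $A$ pointwise), with an object $0$ of empty support and a strictly unital, associative, commutative, equivariant sum on disjointly supported pairs; morphisms ($\mathbf{ParSumCat}$) are equivariant functors preserving $0,+$; $\mathrm{forget}$ is the forgetful functor to $\mathbf{Cat}$. For a finite set $A$, injections $\phi,\phi'\colon A\times\omega\to\omega$ and $X_\bullet=(X_a)_{a\in A}$: $\phi_*(X_\bullet)=\sum_a\phi(a,-)_*(X_a)$, $[\phi',\phi]_{X_\bullet}=\sum_a[\phi'(a,-),\phi(a,-)]_{X_a}$. $\Sigma(\mathcal C)$ is the permutative category with objects finite sequences of objects of $\mathcal C$ (unit the empty sequence $\epsilon$), morphisms $(X_1,\dots,X_m)\to(Y_1,\dots,Y_n)$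 classes $[\psi,f,\phi]$ (injections $\phi\colon\mathbf m\times\omega\to\omega$, $\psi\colon\mathbf n\times\omega\to\omega$, $f\colon\phi_*(X_\bullet)\to\psi_*(Y_\bullet)$) modulo $(\psi,f,\phi)\sim(\psi',[\psi',\psi]f[\phi,\phi'],\phi')$, composition $[\rho,g,\theta][\psi,f,\phi]=[\rho,g[\theta,\psi]f,\phi]$, tensor product concatenation and $[\psi,f,\phi]\otimes[\rho,g,\theta]=[\psi+\rho,f+g,\phi+\theta]$ for disjoint-image representatives, symmetry $[\bar\phi,\mathrm{id},\phi]$; $\Sigma(F)$ applies $F$ entrywise and sends $[\psi,f,\phi]$ to $[\psi,Ff,\phi]$. For a small permutative category $\mathscr P$, $\Phi(\mathscr P)$ is the parsummable category of sequences $(P_1,P_2,\dots)$ with almost all $P_i=\mathbf 1$, morphisms $P\to Q$ being morphisms $\bigotimes_iP_i\to\bigotimes_iQ_i$ in $\mathscr P$; $\Phi(F)$ applies $F$ entrywise and on morphisms. $\Theta(\mathcal C)$ is the full parsummable subcategory of $\Phi\Sigma(\mathcal C)$ on sequences each of whose entries is $\epsilon$ or a $1$-tuple; $\Theta$ is a subfunctor of $\Phi\Sigma$. For finite $A\subset\omega$ and $X_\bullet=(X_a)_{a\in A}$, $\langle A,X_\bullet\rangle$ has $i$-th entry $(X_i)$ for $i\in A$ and $\epsilon$ otherwise; every object of $\Theta(\mathcal C)$ is uniquely of this form. With $\kappa_A\colon\{1,\dots,|A|\}\to A$ the order-preserving bijection and $\kappa_A^*X_\bullet=(X_{\kappa_A(1)},\dots,X_{\kappa_A(|A|)})$,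 a morphism $\langle A,X_\bullet\rangle\to\langle B,Y_\bullet\rangle$ in $\Theta(\mathcal C)$ is a morphism $\kappa_A^*X_\bullet\to\kappa_B^*Y_\bullet$ in $\Sigma(\mathcal C)$. Fix an injection $\phi\colon\omega\times\omega\to\omega$. $S_{\mathcal C}\langle A,X_\bullet\rangle=(\phi|_A)_*(X_\bullet)$ ($\phi|_A$ the restriction to $A\times\omega$); a morphism $\alpha$ has a unique representative $(\phi|_B\circ(\kappa_B\times\mathrm{id}),f,\phi|_A\circ(\kappa_A\times\mathrm{id}))$ and $S_{\mathcal C}(\alpha)=f$; this is a well-defined functor $\Theta(\mathcal C)\to\mathcal C$. *)

theory Defs
  imports Main "HOL-Library.Nat_Bijection"
begin

record ('o, 'm) cat =
  c_obj  :: "'o set"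
  c_arr  :: "'m set"
  c_dom  :: "'m \<Rightarrow> 'o"
  c_cod  :: "'m \<Rightarrow> 'o"
  c_id   :: "'o \<Rightarrow> 'm"
  c_comp :: "'m \<Rightarrow> 'm \<Rightarrow> 'm"   (* c_comp C g f = g \<circ> f *)

definition hom :: "('o, 'm, 'x) cat_scheme \<Rightarrow> 'o \<Rightarrow> 'o \<Rightarrow> 'm set" where
  "hom C X Y = {f \<in> c_arr C. c_dom C f = X \<and> c_cod C f = Y}"

definition is_cat :: "('o, 'm, 'x) cat_scheme \<Rightarrow> bool" where
  "is_cat C \<longleftrightarrow>
     (\<forall>f\<in>c_arr C. c_dom C f \<in> c_obj C \<and> c_cod C f \<in> c_obj C) \<and>
     (\<forall>X\<in>c_obj C. c_id C X \<in> hom C X X) \<and>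
     (\<forall>f\<in>c_arr C. \<forall>g\<in>c_arr C. c_cod C f = c_dom C g \<longrightarrow>
         c_comp C g f \<in> hom C (c_dom C f) (c_cod C g)) \<and>
     (\<forall>f\<in>c_arr C. c_comp C f (c_id C (c_dom C f)) = f \<and> c_comp C (c_id C (c_cod C f)) f = f) \<and>
     (\<forall>f\<in>c_arr C. \<forall>g\<in>c_arr C. \<forall>h\<in>c_arr C. c_cod C f = c_dom C g \<and> c_cod C g = c_dom C h \<longrightarrow>
         c_comp C h (c_comp C g f) = c_comp C (c_comp C h g) f)"

definition is_functor ::
  "('o, 'm, 'x) cat_scheme \<Rightarrow> ('p, 'n, 'y) cat_scheme \<Rightarrow> ('o \<Rightarrow> 'p) \<Rightarrow> ('m \<Rightarrow> 'n) \<Rightarrow> bool" where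
  "is_functor A B Fo Fm \<longleftrightarrow> is_cat A \<and> is_cat B \<and>
     (\<forall>X\<in>c_obj A. Fo X \<in> c_obj B) \<and>
     (\<forall>f\<in>c_arr A. Fm f \<in> hom B (Fo (c_dom A f)) (Fo (c_cod A f))) \<and>
     (\<forall>X\<in>c_obj A. Fm (c_id A X) = c_id B (Fo X)) \<and>
     (\<forall>f\<in>c_arr A. \<forall>g\<in>c_arr A. c_cod A f = c_dom A g \<longrightarrow>
         Fm (c_comp A g f) = c_comp B (Fm g) (Fm f))"

definition is_iso :: "('o, 'm, 'x) cat_scheme \<Rightarrow> 'm \<Rightarrow> bool" where
  "is_iso C f \<longleftrightarrow> f \<in> c_arr C \<and> (\<exists>g\<in>hom C (c_cod C f) (c_dom C f).
      c_comp C g f = c_id C (c_dom C f) \<and> c_comp C f g = c_id C (c_cod C f))"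

definition nat_iso ::
  "('o, 'm, 'x) cat_scheme \<Rightarrow> ('p, 'n, 'y) cat_scheme \<Rightarrow> ('o \<Rightarrow> 'p) \<Rightarrow> ('m \<Rightarrow> 'n)
    \<Rightarrow> ('o \<Rightarrow> 'p) \<Rightarrow> ('m \<Rightarrow> 'n) \<Rightarrow> ('o \<Rightarrow> 'n) \<Rightarrow> bool" where
  "nat_iso A B Fo Fm Go Gm eta \<longleftrightarrow>
     (\<forall>X\<in>c_obj A. eta X \<in> hom B (Fo X) (Go X) \<and> is_iso B (eta X)) \<and>
     (\<forall>f\<in>c_arr A. c_comp B (Gm f) (eta (c_dom A f)) = c_comp B (eta (c_cod A f)) (Fm f))"

definition cat_equivalence ::
  "('o, 'm, 'x) cat_scheme \<Rightarrow> ('p, 'n, 'y) cat_scheme \<Rightarrow> ('o \<Rightarrow> 'p) \<Rightarrow> ('m \<Rightarrow> 'n) \<Rightarrow> bool" where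
  "cat_equivalence A B Fo Fm \<longleftrightarrow> is_functor A B Fo Fm \<and>
     (\<exists>Go Gm eta eps. is_functor B A Go Gm \<and>
        nat_iso A A (\<lambda>X. X) (\<lambda>f. f) (Go \<circ> Fo) (Gm \<circ> Fm) eta \<and>
        nat_iso B B (Fo \<circ> Go) (Fm \<circ> Gm) (\<lambda>X. X) (\<lambda>f. f) eps)"

text \<open>omega is modelled by the type nat (0-based); the injection monoid M is
  the set of injective functions nat \<Rightarrow> nat.
  act_m C v u f is the image of the morphism ([v,u], f) of EM \<times> C under the action
  functor EM \<times> C \<rightarrow> C; so u_* f = act_m C u u f and [v,u]_X = act_m C v u (id X).\<close>

record ('o, 'm) parsum = "('o, 'm) cat" +
  act_o  :: "(nat \<Rightarrow> nat) \<Rightarrow> 'o \<Rightarrow> 'o"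
  act_m  :: "(nat \<Rightarrow> nat) \<Rightarrow> (nat \<Rightarrow> nat) \<Rightarrow> 'm \<Rightarrow> 'm"
  zero   :: "'o"
  plus_o :: "'o \<Rightarrow> 'o \<Rightarrow> 'o"
  plus_m :: "'m \<Rightarrow> 'm \<Rightarrow> 'm"

definition em_cat :: "('o, 'm, 'x) parsum_scheme \<Rightarrow> bool" where
  "em_cat C \<longleftrightarrow> is_cat C \<and>
     (\<forall>u X. inj u \<and> X \<in> c_obj C \<longrightarrow> act_o C u X \<in> c_obj C) \<and>
     (\<forall>u v f. inj u \<and> inj v \<and> f \<in> c_arr C \<longrightarrow>
        act_m C v u f \<in> hom C (act_o C u (c_dom C f)) (act_o C v (c_cod C f))) \<and>
     (\<forall>u X. inj u \<and> X \<in> c_obj C \<longrightarrow> act_m C u u (c_id C X) = c_id C (act_o C u X)) \<and>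
     (\<forall>u v w f g. inj u \<and> inj v \<and> inj w \<and> f \<in> c_arr C \<and> g \<in> c_arr C \<and> c_cod C f = c_dom C g \<longrightarrow>
        c_comp C (act_m C w v g) (act_m C v u f) = act_m C w u (c_comp C g f)) \<and>
     (\<forall>X\<in>c_obj C. act_o C id X = X) \<and>
     (\<forall>f\<in>c_arr C. act_m C id id f = f) \<and>
     (\<forall>u v X. inj u \<and> inj v \<and> X \<in> c_obj C \<longrightarrow> act_o C u (act_o C v X) = act_o C (u \<circ> v) X) \<and>
     (\<forall>u v u' v' f. inj u \<and> inj v \<and> inj u' \<and> inj v' \<and> f \<in> c_arr C \<longrightarrow>
        act_m C v u (act_m C v' u' f) = act_m C (v \<circ> v') (u \<circ> u') f)"

definition supports :: "('o, 'm, 'x) parsum_scheme \<Rightarrow> 'o \<Rightarrow> nat set \<Rightarrow> bool" where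
  "supports C X A \<longleftrightarrow> (\<forall>u. inj u \<and> (\<forall>a\<in>A. u a = a) \<longrightarrow> act_o C u X = X)"

definition supp :: "('o, 'm, 'x) parsum_scheme \<Rightarrow> 'o \<Rightarrow> nat set" where
  "supp C X = \<Inter> {A. finite A \<and> supports C X A}"

definition disj :: "('o, 'm, 'x) parsum_scheme \<Rightarrow> 'o \<Rightarrow> 'o \<Rightarrow> bool" where
  "disj C X Y \<longleftrightarrow> supp C X \<inter> supp C Y = {}"

definition disj_m :: "('o, 'm, 'x) parsum_scheme \<Rightarrow> 'm \<Rightarrow> 'm \<Rightarrow> bool" where
  "disj_m C f g \<longleftrightarrow> f \<in> c_arr C \<and> g \<in> c_arr C \<and>
     disj C (c_dom C f) (c_dom C g) \<and> disj C (c_cod C f) (c_cod C g)"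

definition parsummable :: "('o, 'm, 'x) parsum_scheme \<Rightarrow> bool" where
  "parsummable C \<longleftrightarrow> em_cat C \<and>
     (\<forall>X\<in>c_obj C. \<exists>A. finite A \<and> supports C X A) \<and>
     zero C \<in> c_obj C \<and> supp C (zero C) = {} \<and>
     (\<forall>X\<in>c_obj C. \<forall>Y\<in>c_obj C. disj C X Y \<longrightarrow> plus_o C X Y \<in> c_obj C) \<and>
     (\<forall>f g. disj_m C f g \<longrightarrow>
        plus_m C f g \<in> hom C (plus_o C (c_dom C f) (c_dom C g)) (plus_o C (c_cod C f) (c_cod C g))) \<and>
     (\<forall>X\<in>c_obj C. \<forall>Y\<in>c_obj C. disj C X Y \<longrightarrow>
        plus_m C (c_id C X) (c_id C Y) = c_id C (plus_o C X Y)) \<and>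
     (\<forall>f g f' g'. disj_m C f g \<and> disj_m C f' g' \<and> c_cod C f = c_dom C f' \<and> c_cod C g = c_dom C g' \<longrightarrow>
        plus_m C (c_comp C f' f) (c_comp C g' g) = c_comp C (plus_m C f' g') (plus_m C f g)) \<and>
     (\<forall>X\<in>c_obj C. plus_o C (zero C) X = X) \<and>
     (\<forall>f\<in>c_arr C. plus_m C (c_id C (zero C)) f = f) \<and>
     (\<forall>X\<in>c_obj C. \<forall>Y\<in>c_obj C. \<forall>Z\<in>c_obj C. disj C X Y \<and> disj C X Z \<and> disj C Y Z \<longrightarrow>
        plus_o C (plus_o C X Y) Z = plus_o C X (plus_o C Y Z)) \<and>
     (\<forall>f g h. disj_m C f g \<and> disj_m C f h \<and> disj_m C g h \<longrightarrow>
        plus_m C (plus_m C f g) h = plus_m C f (plus_m C g h)) \<and>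
     (\<forall>X\<in>c_obj C. \<forall>Y\<in>c_obj C. disj C X Y \<longrightarrow> plus_o C X Y = plus_o C Y X) \<and>
     (\<forall>f g. disj_m C f g \<longrightarrow> plus_m C f g = plus_m C g f) \<and>
     (\<forall>u X Y. inj u \<and> X \<in> c_obj C \<and> Y \<in> c_obj C \<and> disj C X Y \<longrightarrow>
        act_o C u (plus_o C X Y) = plus_o C (act_o C u X) (act_o C u Y)) \<and>
     (\<forall>u v f g. inj u \<and> inj v \<and> disj_m C f g \<longrightarrow>
        act_m C v u (plus_m C f g) = plus_m C (act_m C v u f) (act_m C v u g))"

definition parsum_hom ::
  "('o, 'm, 'x) parsum_scheme \<Rightarrow> ('p, 'n, 'y) parsum_scheme \<Rightarrow> ('o \<Rightarrow> 'p) \<Rightarrow> ('m \<Rightarrow> 'n) \<Rightarrow> bool" where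
  "parsum_hom C D Fo Fm \<longleftrightarrow> is_functor C D Fo Fm \<and>
     (\<forall>u X. inj u \<and> X \<in> c_obj C \<longrightarrow> Fo (act_o C u X) = act_o D u (Fo X)) \<and>
     (\<forall>u v f. inj u \<and> inj v \<and> f \<in> c_arr C \<longrightarrow> Fm (act_m C v u f) = act_m D v u (Fm f)) \<and>
     Fo (zero C) = zero D \<and>
     (\<forall>X\<in>c_obj C. \<forall>Y\<in>c_obj C. disj C X Y \<longrightarrow> Fo (plus_o C X Y) = plus_o D (Fo X) (Fo Y)) \<and>
     (\<forall>f g. disj_m C f g \<longrightarrow> Fm (plus_m C f g) = plus_m D (Fm f) (Fm g))"

text \<open>The finite set {1..m} is modelled as {0..<m}; an injection m \<times> omega \<rightarrow> omega is a
  function nat \<times> nat \<Rightarrow> nat injective on {..<m} \<times> UNIV.\<close>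

definition inj_rep :: "nat \<Rightarrow> (nat \<times> nat \<Rightarrow> nat) \<Rightarrow> bool" where
  "inj_rep m \<phi> \<longleftrightarrow> inj_on \<phi> ({..<m} \<times> UNIV)"

definition push :: "('o, 'm, 'x) parsum_scheme \<Rightarrow> (nat \<times> nat \<Rightarrow> nat) \<Rightarrow> 'o list \<Rightarrow> 'o" where
  "push C \<phi> xs = foldr (\<lambda>a acc. plus_o C (act_o C (\<lambda>n. \<phi> (a, n)) (xs ! a)) acc)
                        [0..<length xs] (zero C)"

text \<open>[phi',phi]_X = sum over a of [phi'(a,-), phi(a,-)]_{X_a} : phi_*(X) \<rightarrow> phi'_*(X)\<close>
definition brk :: "('o, 'm, 'x) parsum_scheme \<Rightarrow> (nat \<times> nat \<Rightarrow> nat) \<Rightarrow> (nat \<times> nat \<Rightarrow> nat) \<Rightarrow> 'o list \<Rightarrow> 'm" where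
  "brk C \<phi>' \<phi> xs = foldr (\<lambda>a acc. plus_m C (act_m C (\<lambda>n. \<phi>' (a, n)) (\<lambda>n. \<phi> (a, n)) (c_id C (xs ! a))) acc)
                        [0..<length xs] (c_id C (zero C))"

type_synonym 'm sig_rep = "(nat \<times> nat \<Rightarrow> nat) \<times> 'm \<times> (nat \<times> nat \<Rightarrow> nat)"

definition is_sig_rep :: "('o, 'm, 'x) parsum_scheme \<Rightarrow> 'o list \<Rightarrow> 'o list \<Rightarrow> 'm sig_rep \<Rightarrow> bool" where
  "is_sig_rep C xs ys r \<longleftrightarrow> (case r of (\<psi>, f, \<phi>) \<Rightarrow>
     inj_rep (length xs) \<phi> \<and> inj_rep (length ys) \<psi> \<and> f \<in> hom C (push C \<phi> xs) (push C \<psi> ys))"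

definition sig_cls :: "('o, 'm, 'x) parsum_scheme \<Rightarrow> 'o list \<Rightarrow> 'o list \<Rightarrow> 'm sig_rep \<Rightarrow> 'm sig_rep set" where
  "sig_cls C xs ys r = (case r of (\<psi>, f, \<phi>) \<Rightarrow>
     {(\<psi>', c_comp C (brk C \<psi>' \<psi> ys) (c_comp C f (brk C \<phi> \<phi>' xs)), \<phi>') | \<psi>' \<phi>'.
        inj_rep (length xs) \<phi>' \<and> inj_rep (length ys) \<psi>'})"

type_synonym ('o, 'm) sig_arr = "'o list \<times> 'o list \<times> 'm sig_rep set"

definition sig_arrs :: "('o, 'm, 'x) parsum_scheme \<Rightarrow> ('o, 'm) sig_arr set" where
  "sig_arrs C = {(xs, ys, sig_cls C xs ys r) | xs ys r.
      xs \<in> lists (c_obj C) \<and> ys \<in> lists (c_obj C) \<and> is_sig_rep C xs ys r}"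

definition sig_comp :: "('o, 'm, 'x) parsum_scheme \<Rightarrow> ('o, 'm) sig_arr \<Rightarrow> ('o, 'm) sig_arr \<Rightarrow> ('o, 'm) sig_arr" where
  "sig_comp C \<beta> \<alpha> = (case \<alpha> of (xs, ys, c1) \<Rightarrow> case \<beta> of (_, zs, c2) \<Rightarrow>
      (case (SOME r. r \<in> c1) of (\<psi>, f, \<phi>) \<Rightarrow> case (SOME r. r \<in> c2) of (\<rho>, g, \<theta>) \<Rightarrow>
        (xs, zs, sig_cls C xs zs (\<rho>, c_comp C g (c_comp C (brk C \<theta> \<psi> ys) f), \<phi>))))"

definition sig_id :: "('o, 'm, 'x) parsum_scheme \<Rightarrow> 'o list \<Rightarrow> ('o, 'm) sig_arr" where
  "sig_id C xs = (xs, xs, sig_cls C xs xs (prod_encode, c_id C (push C prod_encode xs), prod_encode))"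

text \<open>Objects of Phi Sigma(C): sequences P_0, P_1, ... of objects of Sigma(C), almost all
  equal to the unit (empty list); Theta(C) requires each entry to be empty or a 1-tuple.\<close>
definition theta_obj :: "('o, 'm, 'x) parsum_scheme \<Rightarrow> (nat \<Rightarrow> 'o list) set" where
  "theta_obj C = {P. finite {i. P i \<noteq> []} \<and> (\<forall>i. length (P i) \<le> 1 \<and> set (P i) \<subseteq> c_obj C)}"

definition tens :: "(nat \<Rightarrow> 'o list) \<Rightarrow> 'o list" where
  "tens P = concat (map P (sorted_list_of_set {i. P i \<noteq> []}))"

type_synonym ('o, 'm) theta_arr = "(nat \<Rightarrow> 'o list) \<times> (nat \<Rightarrow> 'o list) \<times> 'm sig_rep set"

definition Theta :: "('o, 'm, 'x) parsum_scheme \<Rightarrow> (nat \<Rightarrow> 'o list, ('o, 'm) theta_arr) cat" where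
  "Theta C = \<lparr>
     c_obj = theta_obj C,
     c_arr = {(P, Q, c). P \<in> theta_obj C \<and> Q \<in> theta_obj C \<and> (tens P, tens Q, c) \<in> sig_arrs C},
     c_dom = (\<lambda>\<alpha>. fst \<alpha>),
     c_cod = (\<lambda>\<alpha>. fst (snd \<alpha>)),
     c_id = (\<lambda>P. (P, P, snd (snd (sig_id C (tens P))))),
     c_comp = (\<lambda>\<beta> \<alpha>. (fst \<alpha>, fst (snd \<beta>),
        snd (snd (sig_comp C (tens (fst \<beta>), tens (fst (snd \<beta>)), snd (snd \<beta>))
                             (tens (fst \<alpha>), tens (fst (snd \<alpha>)), snd (snd \<alpha>))))))\<rparr>"

definition Theta_obj_map :: "('o \<Rightarrow> 'p) \<Rightarrow> (nat \<Rightarrow> 'o list) \<Rightarrow> (nat \<Rightarrow> 'p list)" where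
  "Theta_obj_map Fo P = (\<lambda>i. map Fo (P i))"

definition Theta_arr_map :: "('o \<Rightarrow> 'p) \<Rightarrow> ('m \<Rightarrow> 'n) \<Rightarrow> ('o, 'm) theta_arr \<Rightarrow> ('p, 'n) theta_arr" where
  "Theta_arr_map Fo Fm \<alpha> = (case \<alpha> of (P, Q, c) \<Rightarrow>
     (Theta_obj_map Fo P, Theta_obj_map Fo Q, (\<lambda>(\<psi>, f, \<phi>). (\<psi>, Fm f, \<phi>)) ` c))"

definition theta_inj :: "(nat \<times> nat \<Rightarrow> nat) \<Rightarrow> (nat \<Rightarrow> 'o list) \<Rightarrow> (nat \<times> nat \<Rightarrow> nat)" where
  "theta_inj \<phi> P = (\<lambda>(a, n). \<phi> (sorted_list_of_set {i. P i \<noteq> []} ! a, n))"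

definition S_obj :: "(nat \<times> nat \<Rightarrow> nat) \<Rightarrow> ('o, 'm, 'x) parsum_scheme \<Rightarrow> (nat \<Rightarrow> 'o list) \<Rightarrow> 'o" where
  "S_obj \<phi> C P = push C (theta_inj \<phi> P) (tens P)"

definition S_arr :: "(nat \<times> nat \<Rightarrow> nat) \<Rightarrow> ('o, 'm, 'x) parsum_scheme \<Rightarrow> ('o, 'm) theta_arr \<Rightarrow> 'm" where
  "S_arr \<phi> C \<alpha> = (case \<alpha> of (P, Q, c) \<Rightarrow> THE f. (theta_inj \<phi> Q, f, theta_inj \<phi> P) \<in> c)"

end

theory Submission
  imports Defs "HOL-Library.Countable_Set"
begin


lemma is_catD1:
  assumes "is_cat C"
  shows "\<forall>f\<in>c_arr C. c_dom C f \<in> c_obj C \<and> c_cod C f \<in> c_obj C"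
  by (insert assms, unfold is_cat_def, elim conjE, assumption)

lemma is_catD2:
  assumes "is_cat C"
  shows "\<forall>X\<in>c_obj C. c_id C X \<in> hom C X X"
  by (insert assms, unfold is_cat_def, elim conjE, assumption)

lemma is_catD3:
  assumes "is_cat C"
  shows "\<forall>f\<in>c_arr C. \<forall>g\<in>c_arr C. c_cod C f = c_dom C g \<longrightarrow>
         c_comp C g f \<in> hom C (c_dom C f) (c_cod C g)"
  by (insert assms, unfold is_cat_def, elim conjE, assumption)

lemma is_catD4:
  assumes "is_cat C"
  shows "\<forall>f\<in>c_arr C. c_comp C f (c_id C (c_dom C f)) = f \<and> c_comp C (c_id C (c_cod C f)) f = f"
  by (insert assms, unfold is_cat_def, elim conjE, assumption)

lemma is_catD5:
  assumes "is_cat C"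
  shows "\<forall>f\<in>c_arr C. \<forall>g\<in>c_arr C. \<forall>h\<in>c_arr C. c_cod C f = c_dom C g \<and> c_cod C g = c_dom C h \<longrightarrow>
         c_comp C h (c_comp C g f) = c_comp C (c_comp C h g) f"
  by (insert assms, unfold is_cat_def, elim conjE, assumption)



lemma is_catI:
  assumes "\<forall>f\<in>c_arr C. c_dom C f \<in> c_obj C \<and> c_cod C f \<in> c_obj C"
    and "\<forall>X\<in>c_obj C. c_id C X \<in> hom C X X"
    and "\<forall>f\<in>c_arr C. \<forall>g\<in>c_arr C. c_cod C f = c_dom C g \<longrightarrow>
         c_comp C g f \<in> hom C (c_dom C f) (c_cod C g)"
    and "\<forall>f\<in>c_arr C. c_comp C f (c_id C (c_dom C f)) = f \<and> c_comp C (c_id C (c_cod C f)) f = f"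
    and "\<forall>f\<in>c_arr C. \<forall>g\<in>c_arr C. \<forall>h\<in>c_arr C. c_cod C f = c_dom C g \<and> c_cod C g = c_dom C h \<longrightarrow>
         c_comp C h (c_comp C g f) = c_comp C (c_comp C h g) f"
  shows "is_cat C"
  using assms unfolding is_cat_def by (intro conjI)

lemma em_catD1:
  assumes "em_cat C"
  shows "is_cat C"
  by (insert assms, unfold em_cat_def, elim conjE, assumption)

lemma em_catD2:
  assumes "em_cat C"
  shows "\<forall>u X. inj u \<and> X \<in> c_obj C \<longrightarrow> act_o C u X \<in> c_obj C"
  by (insert assms, unfold em_cat_def, elim conjE, assumption)

lemma em_catD3:
  assumes "em_cat C"
  shows "\<forall>u v f. inj u \<and> inj v \<and> f \<in> c_arr C \<longrightarrow>
        act_m C v u f \<in> hom C (act_o C u (c_dom C f)) (act_o C v (c_cod C f))"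
  by (insert assms, unfold em_cat_def, elim conjE, assumption)

lemma em_catD4:
  assumes "em_cat C"
  shows "\<forall>u X. inj u \<and> X \<in> c_obj C \<longrightarrow> act_m C u u (c_id C X) = c_id C (act_o C u X)"
  by (insert assms, unfold em_cat_def, elim conjE, assumption)

lemma em_catD5:
  assumes "em_cat C"
  shows "\<forall>u v w f g. inj u \<and> inj v \<and> inj w \<and> f \<in> c_arr C \<and> g \<in> c_arr C \<and> c_cod C f = c_dom C g \<longrightarrow>
        c_comp C (act_m C w v g) (act_m C v u f) = act_m C w u (c_comp C g f)"
  by (insert assms, unfold em_cat_def, elim conjE, assumption)

lemma em_catD6:
  assumes "em_cat C"
  shows "\<forall>X\<in>c_obj C. act_o C id X = X"
  by (insert assms, unfold em_cat_def, elim conjE, assumption)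

lemma em_catD7:
  assumes "em_cat C"
  shows "\<forall>f\<in>c_arr C. act_m C id id f = f"
  by (insert assms, unfold em_cat_def, elim conjE, assumption)

lemma em_catD8:
  assumes "em_cat C"
  shows "\<forall>u v X. inj u \<and> inj v \<and> X \<in> c_obj C \<longrightarrow> act_o C u (act_o C v X) = act_o C (u \<circ> v) X"
  by (insert assms, unfold em_cat_def, elim conjE, assumption)



lemma parsummableD1:
  assumes "parsummable C"
  shows "em_cat C"
  by (insert assms, unfold parsummable_def, elim conjE, assumption)

lemma parsummableD2:
  assumes "parsummable C"
  shows "\<forall>X\<in>c_obj C. \<exists>A. finite A \<and> supports C X A"
  by (insert assms, unfold parsummable_def, elim conjE, assumption)

lemma parsummableD3:
  assumes "parsummable C"
  shows "zero C \<in> c_obj C"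
  by (insert assms, unfold parsummable_def, elim conjE, assumption)

lemma parsummableD4:
  assumes "parsummable C"
  shows "supp C (zero C) = {}"
  by (insert assms, unfold parsummable_def, elim conjE, assumption)

lemma parsummableD5:
  assumes "parsummable C"
  shows "\<forall>X\<in>c_obj C. \<forall>Y\<in>c_obj C. disj C X Y \<longrightarrow> plus_o C X Y \<in> c_obj C"
  by (insert assms, unfold parsummable_def, elim conjE, assumption)

lemma parsummableD6:
  assumes "parsummable C"
  shows "\<forall>f g. disj_m C f g \<longrightarrow>
        plus_m C f g \<in> hom C (plus_o C (c_dom C f) (c_dom C g)) (plus_o C (c_cod C f) (c_cod C g))"
  by (insert assms, unfold parsummable_def, elim conjE, assumption)

lemma parsummableD7:
  assumes "parsummable C"
  shows "\<forall>X\<in>c_obj C. \<forall>Y\<in>c_obj C. disj C X Y \<longrightarrow>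
        plus_m C (c_id C X) (c_id C Y) = c_id C (plus_o C X Y)"
  by (insert assms, unfold parsummable_def, elim conjE, assumption)

lemma parsummableD8:
  assumes "parsummable C"
  shows "\<forall>f g f' g'. disj_m C f g \<and> disj_m C f' g' \<and> c_cod C f = c_dom C f' \<and> c_cod C g = c_dom C g' \<longrightarrow>
        plus_m C (c_comp C f' f) (c_comp C g' g) = c_comp C (plus_m C f' g') (plus_m C f g)"
  by (insert assms, unfold parsummable_def, elim conjE, assumption)

lemma parsummableD9:
  assumes "parsummable C"
  shows "\<forall>X\<in>c_obj C. plus_o C (zero C) X = X"
  by (insert assms, unfold parsummable_def, elim conjE, assumption)

lemma parsummableD10:
  assumes "parsummable C"
  shows "\<forall>X\<in>c_obj C. \<forall>Y\<in>c_obj C. disj C X Y \<longrightarrow> plus_o C X Y = plus_o C Y X"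
  by (insert assms, unfold parsummable_def, elim conjE, assumption)

lemma parsummableD11:
  assumes "parsummable C"
  shows "\<forall>u X Y. inj u \<and> X \<in> c_obj C \<and> Y \<in> c_obj C \<and> disj C X Y \<longrightarrow>
        act_o C u (plus_o C X Y) = plus_o C (act_o C u X) (act_o C u Y)"
  by (insert assms, unfold parsummable_def, elim conjE, assumption)



lemma parsum_homD1:
  assumes "parsum_hom C D Fo Fm"
  shows "is_functor C D Fo Fm"
  by (insert assms, unfold parsum_hom_def, elim conjE, assumption)

lemma parsum_homD2:
  assumes "parsum_hom C D Fo Fm"
  shows "\<forall>u X. inj u \<and> X \<in> c_obj C \<longrightarrow> Fo (act_o C u X) = act_o D u (Fo X)"
  by (insert assms, unfold parsum_hom_def, elim conjE, assumption)

lemma parsum_homD3: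
  assumes "parsum_hom C D Fo Fm"
  shows "Fo (zero C) = zero D"
  by (insert assms, unfold parsum_hom_def, elim conjE, assumption)

lemma parsum_homD4:
  assumes "parsum_hom C D Fo Fm"
  shows "\<forall>X\<in>c_obj C. \<forall>Y\<in>c_obj C. disj C X Y \<longrightarrow> Fo (plus_o C X Y) = plus_o D (Fo X) (Fo Y)"
  by (insert assms, unfold parsum_hom_def, elim conjE, assumption)



locale PS =
  fixes C :: "('o, 'm, 'x) parsum_scheme"
  assumes ps: "parsummable C"
begin

lemma emc: "em_cat C" by (rule parsummableD1[OF ps])
lemma cat: "is_cat C" by (rule em_catD1[OF emc])

lemma hom_iff: "f \<in> hom C X Y \<longleftrightarrow> f \<in> c_arr C \<and> c_dom C f = X \<and> c_cod C f = Y"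
  by (simp add: hom_def)

lemma arr_ob: "f \<in> hom C X Y \<Longrightarrow> X \<in> c_obj C \<and> Y \<in> c_obj C"
  using is_catD1[OF cat] by (auto simp: hom_def)
lemma id_hom: "X \<in> c_obj C \<Longrightarrow> c_id C X \<in> hom C X X"
  using is_catD2[OF cat] by blast
lemma comp_hom: "f \<in> hom C X Y \<Longrightarrow> g \<in> hom C Y Z \<Longrightarrow> c_comp C g f \<in> hom C X Z"
  using is_catD3[OF cat] by (auto simp: hom_def)
lemma id_left: "f \<in> hom C X Y \<Longrightarrow> c_comp C (c_id C Y) f = f"
  using is_catD4[OF cat] by (auto simp: hom_def)
lemma id_right: "f \<in> hom C X Y \<Longrightarrow> c_comp C f (c_id C X) = f"
  using is_catD4[OF cat] by (auto simp: hom_def)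
lemma assoc: "f \<in> hom C X Y \<Longrightarrow> g \<in> hom C Y Z \<Longrightarrow> h \<in> hom C Z W \<Longrightarrow>
   c_comp C h (c_comp C g f) = c_comp C (c_comp C h g) f"
  using is_catD5[OF cat] by (auto simp: hom_def)

lemma act_ob: "inj u \<Longrightarrow> X \<in> c_obj C \<Longrightarrow> act_o C u X \<in> c_obj C"
  using em_catD2[OF emc] by blast
lemma act_hom: "inj u \<Longrightarrow> inj v \<Longrightarrow> f \<in> hom C X Y \<Longrightarrow> act_m C v u f \<in> hom C (act_o C u X) (act_o C v Y)"
  using em_catD3[OF emc] by (auto simp: hom_def)
lemma act_id: "inj u \<Longrightarrow> X \<in> c_obj C \<Longrightarrow> act_m C u u (c_id C X) = c_id C (act_o C u X)"
  using em_catD4[OF emc] by blast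
lemma act_comp: "inj u \<Longrightarrow> inj v \<Longrightarrow> inj w \<Longrightarrow> f \<in> hom C X Y \<Longrightarrow> g \<in> hom C Y Z \<Longrightarrow>
   c_comp C (act_m C w v g) (act_m C v u f) = act_m C w u (c_comp C g f)"
  using em_catD5[OF emc] by (auto simp: hom_def)
lemma act_o_id: "X \<in> c_obj C \<Longrightarrow> act_o C id X = X"
  using em_catD6[OF emc] by blast
lemma act_m_id: "f \<in> c_arr C \<Longrightarrow> act_m C id id f = f"
  using em_catD7[OF emc] by blast
lemma act_o_comp: "inj u \<Longrightarrow> inj v \<Longrightarrow> X \<in> c_obj C \<Longrightarrow> act_o C u (act_o C v X) = act_o C (u \<circ> v) X"
  using em_catD8[OF emc] by blast

lemma fin_supp: "X \<in> c_obj C \<Longrightarrow> \<exists>A. finite A \<and> supports C X A"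
  using parsummableD2[OF ps] by blast
lemma zero_ob: "zero C \<in> c_obj C" by (rule parsummableD3[OF ps])
lemma supp_zero: "supp C (zero C) = {}" by (rule parsummableD4[OF ps])
lemma plus_ob: "X \<in> c_obj C \<Longrightarrow> Y \<in> c_obj C \<Longrightarrow> disj C X Y \<Longrightarrow> plus_o C X Y \<in> c_obj C"
  using parsummableD5[OF ps] by blast
lemma plus_hom: "f \<in> hom C X Y \<Longrightarrow> g \<in> hom C X' Y' \<Longrightarrow> disj C X X' \<Longrightarrow> disj C Y Y' \<Longrightarrow>
   plus_m C f g \<in> hom C (plus_o C X X') (plus_o C Y Y')"
  using parsummableD6[OF ps] by (auto simp: hom_def disj_m_def)
lemma plus_id: "X \<in> c_obj C \<Longrightarrow> Y \<in> c_obj C \<Longrightarrow> disj C X Y \<Longrightarrow>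
        plus_m C (c_id C X) (c_id C Y) = c_id C (plus_o C X Y)"
  using parsummableD7[OF ps] by blast
lemma plus_interchange:
  "f \<in> hom C X Y \<Longrightarrow> g \<in> hom C X' Y' \<Longrightarrow> f' \<in> hom C Y Z \<Longrightarrow> g' \<in> hom C Y' Z' \<Longrightarrow>
   disj C X X' \<Longrightarrow> disj C Y Y' \<Longrightarrow> disj C Z Z' \<Longrightarrow>
   plus_m C (c_comp C f' f) (c_comp C g' g) = c_comp C (plus_m C f' g') (plus_m C f g)"
  using parsummableD8[OF ps] by (auto simp: hom_def disj_m_def)
lemma zero_plus: "X \<in> c_obj C \<Longrightarrow> plus_o C (zero C) X = X"
  using parsummableD9[OF ps] by blast
lemma plus_comm: "X \<in> c_obj C \<Longrightarrow> Y \<in> c_obj C \<Longrightarrow> disj C X Y \<Longrightarrow> plus_o C X Y = plus_o C Y X"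
  using parsummableD10[OF ps] by blast
lemma act_plus: "inj u \<Longrightarrow> X \<in> c_obj C \<Longrightarrow> Y \<in> c_obj C \<Longrightarrow> disj C X Y \<Longrightarrow>
        act_o C u (plus_o C X Y) = plus_o C (act_o C u X) (act_o C u Y)"
  using parsummableD11[OF ps] by blast

end


definition sh :: "(nat \<times> nat \<Rightarrow> nat) \<Rightarrow> (nat \<times> nat \<Rightarrow> nat)" where
  "sh \<psi> = (\<lambda>(a, n). \<psi> (Suc a, n))"

definition row :: "(nat \<times> nat \<Rightarrow> nat) \<Rightarrow> nat \<Rightarrow> nat \<Rightarrow> nat" where
  "row \<psi> a = (\<lambda>n. \<psi> (a, n))"

lemma push_Nil: "push C \<psi> [] = zero C" by (simp add: push_def)

lemma upt_Suc_shift: "[0..<Suc n] = 0 # map Suc [0..<n]"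
  by (simp add: upt_conv_Cons map_Suc_upt)

lemma foldr_map_Suc: "foldr f (map Suc l) z = foldr (\<lambda>a. f (Suc a)) l z"
  by (induct l) auto

lemma push_Cons: "push C \<psi> (x # xs) = plus_o C (act_o C (row \<psi> 0) x) (push C (sh \<psi>) xs)"
  unfolding push_def by (simp only: length_Cons upt_Suc_shift foldr.simps o_apply foldr_map_Suc) (simp add: sh_def row_def)

lemma brk_Nil: "brk C \<psi>' \<psi> [] = c_id C (zero C)" by (simp add: brk_def)

lemma brk_Cons: "brk C \<psi>' \<psi> (x # xs) =
   plus_m C (act_m C (row \<psi>' 0) (row \<psi> 0) (c_id C x)) (brk C (sh \<psi>') (sh \<psi>) xs)"
  unfolding brk_def by (simp only: length_Cons upt_Suc_shift foldr.simps o_apply foldr_map_Suc) (simp add: sh_def row_def)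

lemma inj_rep_row: "inj_rep k \<psi> \<Longrightarrow> a < k \<Longrightarrow> inj (row \<psi> a)"
  unfolding inj_rep_def row_def by (auto simp: inj_on_def)

lemma inj_rep_sh: "inj_rep (Suc k) \<psi> \<Longrightarrow> inj_rep k (sh \<psi>)"
  unfolding inj_rep_def sh_def by (auto simp: inj_on_def)

lemma sh_image: "sh \<psi> ` ({..<k} \<times> UNIV) = \<psi> ` ({1..<Suc k} \<times> UNIV)"
proof (rule set_eqI, rule iffI)
  fix y assume "y \<in> sh \<psi> ` ({..<k} \<times> UNIV)" then show "y \<in> \<psi> ` ({1..<Suc k} \<times> UNIV)"
    by (auto simp: sh_def)
next
  fix y assume "y \<in> \<psi> ` ({1..<Suc k} \<times> UNIV)"
  then obtain a b where h: "y = \<psi> (a,b)" "1 \<le> a" "a < Suc k" by auto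
  then have "y = sh \<psi> (a - 1, b)" "(a - 1, b) \<in> {..<k} \<times> UNIV" by (auto simp: sh_def)
  then show "y \<in> sh \<psi> ` ({..<k} \<times> UNIV)" by blast
qed

lemma row_image: "range (row \<psi> a) = \<psi> ` ({a} \<times> UNIV)"
  by (auto simp: row_def)

lemma row_sh_disj: assumes "inj_rep (Suc k) \<psi>" shows "range (row \<psi> 0) \<inter> sh \<psi> ` ({..<k} \<times> UNIV) = {}"
proof -
  { fix b a c assume "\<psi> (0, b) = \<psi> (a, c)" "1 \<le> a" "a < Suc k"
    then have "(0, b) = (a, c)" using assms unfolding inj_rep_def by (intro inj_onD[of \<psi>]) auto
    then have False using \<open>1 \<le> a\<close> by simp }
  then show ?thesis unfolding sh_image row_image by fastforce
qed

lemma row_sub: "range (row \<psi> 0) \<subseteq> \<psi> ` ({..<Suc k} \<times> UNIV)"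
  unfolding row_image by auto

lemma sh_sub: "sh \<psi> ` ({..<k} \<times> UNIV) \<subseteq> \<psi> ` ({..<Suc k} \<times> UNIV)"
  unfolding sh_image by auto

context PS
begin

lemma agree_inf:
  assumes X: "X \<in> c_obj C" and sX: "supports C X A" and u: "inj u" and v: "inj v"
    and uv: "\<forall>a\<in>A. u a = v a" and inf: "infinite (u ` (- A) \<inter> v ` (- A))"
  shows "act_o C u X = act_o C v X"
proof -
  define I where "I = u ` (- A) \<inter> v ` (- A)"
  define e where "e = from_nat_into I"
  have be: "bij_betw e UNIV I" unfolding e_def using inf I_def
    by (simp add: bij_betw_from_nat_into)
  have eI: "e n \<in> I" for n using be by (auto simp: bij_betw_def)
  have einj: "inj e" using be by (auto simp: bij_betw_def)
  define \<sigma> where "\<sigma> = (\<lambda>n. if n \<in> A then n else inv_into (- A) u (e n))"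
  define \<tau> where "\<tau> = (\<lambda>n. if n \<in> A then n else inv_into (- A) v (e n))"
  have inv_u: "inv_into (- A) u (e n) \<in> - A" "u (inv_into (- A) u (e n)) = e n" for n
  proof -
    have "e n \<in> u ` (- A)" using eI[of n] unfolding I_def by auto
    then show "inv_into (- A) u (e n) \<in> - A" "u (inv_into (- A) u (e n)) = e n"
      by (rule inv_into_into, rule f_inv_into_f)
  qed
  have inv_v: "inv_into (- A) v (e n) \<in> - A" "v (inv_into (- A) v (e n)) = e n" for n
  proof -
    have "e n \<in> v ` (- A)" using eI[of n] unfolding I_def by auto
    then show "inv_into (- A) v (e n) \<in> - A" "v (inv_into (- A) v (e n)) = e n"
      by (rule inv_into_into, rule f_inv_into_f)
  qed
  have isg: "inj \<sigma>"
  proof (rule injI)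
    fix n m assume h: "\<sigma> n = \<sigma> m"
    show "n = m"
    proof (cases "n \<in> A"; cases "m \<in> A")
      assume "n \<in> A" "m \<in> A" then show ?thesis using h by (simp add: \<sigma>_def)
    next
      assume "n \<in> A" "m \<notin> A" then show ?thesis using h inv_u(1)[of m] by (simp add: \<sigma>_def)
    next
      assume "n \<notin> A" "m \<in> A" then show ?thesis using h inv_u(1)[of n] by (simp add: \<sigma>_def)
    next
      assume "n \<notin> A" "m \<notin> A"
      then have "inv_into (- A) u (e n) = inv_into (- A) u (e m)" using h by (simp add: \<sigma>_def)
      then have "e n = e m" using inv_u(2)[of n] inv_u(2)[of m] by metis
      then show "n = m" using einj by (simp add: inj_eq)
    qed
  qed
  have itg: "inj \<tau>"
  proof (rule injI)
    fix n m assume h: "\<tau> n = \<tau> m"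
    show "n = m"
    proof (cases "n \<in> A"; cases "m \<in> A")
      assume "n \<in> A" "m \<in> A" then show ?thesis using h by (simp add: \<tau>_def)
    next
      assume "n \<in> A" "m \<notin> A" then show ?thesis using h inv_v(1)[of m] by (simp add: \<tau>_def)
    next
      assume "n \<notin> A" "m \<in> A" then show ?thesis using h inv_v(1)[of n] by (simp add: \<tau>_def)
    next
      assume "n \<notin> A" "m \<notin> A"
      then have "inv_into (- A) v (e n) = inv_into (- A) v (e m)" using h by (simp add: \<tau>_def)
      then have "e n = e m" using inv_v(2)[of n] inv_v(2)[of m] by metis
      then show "n = m" using einj by (simp add: inj_eq)
    qed
  qed
  have eq: "u \<circ> \<sigma> = v \<circ> \<tau>"
    by (rule ext) (auto simp: \<sigma>_def \<tau>_def inv_u inv_v uv)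
  have s1: "act_o C \<sigma> X = X" using sX isg unfolding supports_def \<sigma>_def by auto
  have s2: "act_o C \<tau> X = X" using sX itg unfolding supports_def \<tau>_def by auto
  have "act_o C u X = act_o C u (act_o C \<sigma> X)" using s1 by simp
  also have "\<dots> = act_o C (u \<circ> \<sigma>) X" by (rule act_o_comp[OF u isg X])
  also have "\<dots> = act_o C (v \<circ> \<tau>) X" using eq by simp
  also have "\<dots> = act_o C v (act_o C \<tau> X)" by (rule act_o_comp[OF v itg X, symmetric])
  also have "\<dots> = act_o C v X" using s2 by simp
  finally show ?thesis .
qed


lemma agree:
  assumes X: "X \<in> c_obj C" and fA: "finite A" and sX: "supports C X A" and u: "inj u" and v: "inj v"
    and uv: "\<forall>a\<in>A. u a = v a"
  shows "act_o C u X = act_o C v X"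
proof (cases "infinite (u ` (- A) \<inter> v ` (- A))")
  case True then show ?thesis using agree_inf[OF X sX u v uv] by blast
next
  case False
  define U where "U = u ` (- A) - v ` (- A)"
  define V where "V = v ` (- A) - u ` (- A)"
  have infA: "infinite (- A)" using fA by (simp add: Compl_eq_Diff_UNIV infinite_UNIV_nat Diff_infinite_finite)
  have iu: "infinite (u ` (- A))" using infA u by (metis finite_imageD inj_on_subset subset_UNIV)
  have iv: "infinite (v ` (- A))" using infA v by (metis finite_imageD inj_on_subset subset_UNIV)
  have "u ` (- A) = U \<union> (u ` (- A) \<inter> v ` (- A))" unfolding U_def by blast
  then have iU: "infinite U" using iu False by (metis finite_UnI)
  have "v ` (- A) = V \<union> (u ` (- A) \<inter> v ` (- A))" unfolding V_def by blast
  then have iV: "infinite V" using iv False by (metis finite_UnI)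
  define W where "W = U \<union> V"
  have iW: "infinite W" using iU unfolding W_def by simp
  define b where "b = from_nat_into W \<circ> to_nat_on (- A)"
  have bb: "bij_betw b (- A) W" unfolding b_def
    by (rule bij_betw_trans[OF to_nat_on_infinite bij_betw_from_nat_into]) (use infA iW in auto)
  define w where "w = (\<lambda>n. if n \<in> A then u n else b n)"
  have bW: "n \<notin> A \<Longrightarrow> b n \<in> W" for n using bb by (auto simp: bij_betw_def)
  have binj: "n \<notin> A \<Longrightarrow> m \<notin> A \<Longrightarrow> b n = b m \<Longrightarrow> n = m" for n m
    using bb by (auto simp: bij_betw_def inj_on_def)
  have uA: "n \<in> A \<Longrightarrow> u n \<notin> W" for n
  proof
    assume n: "n \<in> A" and "u n \<in> W"
    then have "u n \<in> u ` (- A) \<or> v n \<in> v ` (- A)" using uv unfolding W_def U_def V_def by auto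
    then show False using n u v by (auto simp: inj_eq)
  qed
  have w: "inj w"
  proof (rule injI)
    fix n m assume h: "w n = w m"
    show "n = m"
    proof (cases "n \<in> A"; cases "m \<in> A")
      assume "n \<in> A" "m \<in> A" then show ?thesis using h u by (simp add: w_def inj_eq)
    next
      assume "n \<in> A" "m \<notin> A" then show ?thesis using h uA[of n] bW[of m] by (simp add: w_def)
    next
      assume "n \<notin> A" "m \<in> A" then show ?thesis using h uA[of m] bW[of n] by (simp add: w_def)
    next
      assume "n \<notin> A" "m \<notin> A" then show ?thesis using h binj by (simp add: w_def)
    qed
  qed
  have wimg: "w ` (- A) = W" using bb unfolding w_def bij_betw_def by auto
  have "U \<subseteq> u ` (- A) \<inter> w ` (- A)" unfolding wimg W_def U_def by blast
  then have i1: "infinite (u ` (- A) \<inter> w ` (- A))" using iU finite_subset by blast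
  have "V \<subseteq> w ` (- A) \<inter> v ` (- A)" unfolding wimg W_def V_def by blast
  then have i2: "infinite (w ` (- A) \<inter> v ` (- A))" using iV finite_subset by blast
  have "act_o C u X = act_o C w X" by (rule agree_inf[OF X sX u w _ i1]) (simp add: w_def)
  also have "\<dots> = act_o C v X" by (rule agree_inf[OF X sX w v _ i2]) (simp add: w_def uv)
  finally show ?thesis .
qed

lemma supports_act:
  assumes X: "X \<in> c_obj C" and fA: "finite A" and sX: "supports C X A" and u: "inj u"
  shows "supports C (act_o C u X) (u ` A)"
  unfolding supports_def
proof (intro allI impI)
  fix w assume h: "inj w \<and> (\<forall>a\<in>u ` A. w a = a)"
  then have w: "inj w" by blast
  have "act_o C w (act_o C u X) = act_o C (w \<circ> u) X" by (rule act_o_comp[OF w u X])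
  also have "\<dots> = act_o C u X" by (rule agree[OF X fA sX inj_compose[OF w u] u]) (use h in auto)
  finally show "act_o C w (act_o C u X) = act_o C u X" .
qed

lemma supports_plus:
  assumes X: "X \<in> c_obj C" and Y: "Y \<in> c_obj C" and d: "disj C X Y"
    and sX: "supports C X A" and sY: "supports C Y B"
  shows "supports C (plus_o C X Y) (A \<union> B)"
  unfolding supports_def
proof (intro allI impI)
  fix w assume h: "inj w \<and> (\<forall>a\<in>A \<union> B. w a = a)"
  then have "act_o C w X = X" "act_o C w Y = Y" using sX sY unfolding supports_def by auto
  then show "act_o C w (plus_o C X Y) = plus_o C X Y" using act_plus[OF _ X Y d, of w] h by simp
qed

lemma supp_sub: "finite A \<Longrightarrow> supports C X A \<Longrightarrow> supp C X \<subseteq> A"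
  unfolding supp_def by blast

definition good :: "'o \<Rightarrow> nat set \<Rightarrow> bool" where
  "good X S \<longleftrightarrow> X \<in> c_obj C \<and> (X = zero C \<or> (\<exists>A. finite A \<and> A \<subseteq> S \<and> supports C X A))"

lemma good_ob: "good X S \<Longrightarrow> X \<in> c_obj C" by (simp add: good_def)

lemma good_supp: "good X S \<Longrightarrow> supp C X \<subseteq> S"
  unfolding good_def using supp_zero supp_sub by blast

lemma good_disj: "good X S \<Longrightarrow> good Y T \<Longrightarrow> S \<inter> T = {} \<Longrightarrow> disj C X Y"
  unfolding disj_def using good_supp by blast

lemma plus_zero: "X \<in> c_obj C \<Longrightarrow> plus_o C X (zero C) = X"
proof -
  assume X: "X \<in> c_obj C"
  have "disj C X (zero C)" by (simp add: disj_def supp_zero)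
  then show ?thesis using plus_comm[OF X zero_ob] zero_plus[OF X] by simp
qed

lemma good_mono: "good X S \<Longrightarrow> S \<subseteq> T \<Longrightarrow> good X T"
  unfolding good_def by blast

lemma good_zero: "good (zero C) S" by (simp add: good_def zero_ob)

lemma good_plus:
  assumes gX: "good X S" and gY: "good Y T" and st: "S \<inter> T = {}"
  shows "good (plus_o C X Y) (S \<union> T)"
proof -
  have X: "X \<in> c_obj C" and Y: "Y \<in> c_obj C" using gX gY by (auto simp: good_def)
  have d: "disj C X Y" by (rule good_disj[OF gX gY st])
  show ?thesis
  proof (cases "X = zero C")
    case True then show ?thesis using zero_plus[OF Y] gY good_mono by auto
  next
    case nX: False
    show ?thesis
    proof (cases "Y = zero C")
      case True then show ?thesis using plus_zero[OF X] gX good_mono by auto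
    next
      case False
      then obtain B where B: "finite B" "B \<subseteq> T" "supports C Y B" using gY by (auto simp: good_def)
      obtain A where A: "finite A" "A \<subseteq> S" "supports C X A" using gX nX by (auto simp: good_def)
      show ?thesis unfolding good_def using plus_ob[OF X Y d] supports_plus[OF X Y d A(3) B(3)] A B
        by blast
    qed
  qed
qed

lemma good_act: "inj u \<Longrightarrow> X \<in> c_obj C \<Longrightarrow> good (act_o C u X) (range u)"
proof -
  assume u: "inj u" and X: "X \<in> c_obj C"
  obtain A where A: "finite A" "supports C X A" using fin_supp[OF X] by blast
  show ?thesis unfolding good_def using act_ob[OF u X] supports_act[OF X A(1) A(2) u] A(1) by blast
qed

lemma good_push:
  "xs \<in> lists (c_obj C) \<Longrightarrow> inj_rep (length xs) \<psi> \<Longrightarrow> good (push C \<psi> xs) (\<psi> ` ({..<length xs} \<times> UNIV))"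
proof (induct xs arbitrary: \<psi>)
  case Nil then show ?case by (simp add: push_Nil good_zero)
next
  case (Cons x xs)
  have x: "x \<in> c_obj C" and xs: "xs \<in> lists (c_obj C)" using Cons.prems by auto
  have ir: "inj_rep (Suc (length xs)) \<psi>" using Cons.prems by simp
  have g1: "good (act_o C (row \<psi> 0) x) (range (row \<psi> 0))"
    by (rule good_act[OF inj_rep_row[OF ir] x]) simp
  have g2: "good (push C (sh \<psi>) xs) (sh \<psi> ` ({..<length xs} \<times> UNIV))"
    by (rule Cons.hyps[OF xs inj_rep_sh[OF ir]])
  have "good (plus_o C (act_o C (row \<psi> 0) x) (push C (sh \<psi>) xs))
     (range (row \<psi> 0) \<union> sh \<psi> ` ({..<length xs} \<times> UNIV))"
    by (rule good_plus[OF g1 g2 row_sh_disj[OF ir]])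
  moreover have "range (row \<psi> 0) \<union> sh \<psi> ` ({..<length xs} \<times> UNIV) \<subseteq> \<psi> ` ({..<length (x # xs)} \<times> UNIV)"
    using row_sub[of \<psi> "length xs"] sh_sub[of \<psi> "length xs"] by simp
  ultimately show ?case unfolding push_Cons by (rule good_mono)
qed

lemma push_ob: "xs \<in> lists (c_obj C) \<Longrightarrow> inj_rep (length xs) \<psi> \<Longrightarrow> push C \<psi> xs \<in> c_obj C"
  using good_push good_ob by blast

lemma brk_hom:
  "xs \<in> lists (c_obj C) \<Longrightarrow> inj_rep (length xs) \<psi> \<Longrightarrow> inj_rep (length xs) \<psi>' \<Longrightarrow>
   brk C \<psi>' \<psi> xs \<in> hom C (push C \<psi> xs) (push C \<psi>' xs)"
proof (induct xs arbitrary: \<psi> \<psi>')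
  case Nil then show ?case by (simp add: push_Nil brk_Nil id_hom zero_ob)
next
  case (Cons x xs)
  have x: "x \<in> c_obj C" and xs: "xs \<in> lists (c_obj C)" using Cons.prems by auto
  have ir: "inj_rep (Suc (length xs)) \<psi>" "inj_rep (Suc (length xs)) \<psi>'" using Cons.prems by simp_all
  have r: "inj (row \<psi> 0)" "inj (row \<psi>' 0)" using inj_rep_row ir by auto
  have f: "act_m C (row \<psi>' 0) (row \<psi> 0) (c_id C x) \<in> hom C (act_o C (row \<psi> 0) x) (act_o C (row \<psi>' 0) x)"
    by (rule act_hom[OF r(1) r(2) id_hom[OF x]])
  have g: "brk C (sh \<psi>') (sh \<psi>) xs \<in> hom C (push C (sh \<psi>) xs) (push C (sh \<psi>') xs)"
    by (rule Cons.hyps[OF xs inj_rep_sh[OF ir(1)] inj_rep_sh[OF ir(2)]])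
  have d1: "disj C (act_o C (row \<psi> 0) x) (push C (sh \<psi>) xs)"
    by (rule good_disj[OF good_act[OF r(1) x] good_push[OF xs inj_rep_sh[OF ir(1)]] row_sh_disj[OF ir(1)]])
  have d2: "disj C (act_o C (row \<psi>' 0) x) (push C (sh \<psi>') xs)"
    by (rule good_disj[OF good_act[OF r(2) x] good_push[OF xs inj_rep_sh[OF ir(2)]] row_sh_disj[OF ir(2)]])
  show ?case unfolding brk_Cons push_Cons by (rule plus_hom[OF f g d1 d2])
qed

lemma brk_self:
  "xs \<in> lists (c_obj C) \<Longrightarrow> inj_rep (length xs) \<psi> \<Longrightarrow> brk C \<psi> \<psi> xs = c_id C (push C \<psi> xs)"
proof (induct xs arbitrary: \<psi>)
  case Nil then show ?case by (simp add: push_Nil brk_Nil)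
next
  case (Cons x xs)
  have x: "x \<in> c_obj C" and xs: "xs \<in> lists (c_obj C)" using Cons.prems by auto
  have ir: "inj_rep (Suc (length xs)) \<psi>" using Cons.prems by simp_all
  have r: "inj (row \<psi> 0)" using inj_rep_row ir by auto
  have d1: "disj C (act_o C (row \<psi> 0) x) (push C (sh \<psi>) xs)"
    by (rule good_disj[OF good_act[OF r x] good_push[OF xs inj_rep_sh[OF ir]] row_sh_disj[OF ir]])
  show ?case unfolding brk_Cons push_Cons Cons.hyps[OF xs inj_rep_sh[OF ir]] act_id[OF r x]
    by (rule plus_id[OF act_ob[OF r x] push_ob[OF xs inj_rep_sh[OF ir]] d1])
qed

lemma brk_comp:
  "xs \<in> lists (c_obj C) \<Longrightarrow> inj_rep (length xs) \<psi> \<Longrightarrow> inj_rep (length xs) \<psi>' \<Longrightarrow> inj_rep (length xs) \<psi>'' \<Longrightarrow>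
   c_comp C (brk C \<psi>'' \<psi>' xs) (brk C \<psi>' \<psi> xs) = brk C \<psi>'' \<psi> xs"
proof (induct xs arbitrary: \<psi> \<psi>' \<psi>'')
  case Nil then show ?case by (simp add: brk_Nil id_left[OF id_hom[OF zero_ob]])
next
  case (Cons x xs)
  have x: "x \<in> c_obj C" and xs: "xs \<in> lists (c_obj C)" using Cons.prems by auto
  have ir: "inj_rep (Suc (length xs)) \<psi>" "inj_rep (Suc (length xs)) \<psi>'" "inj_rep (Suc (length xs)) \<psi>''"
    using Cons.prems by simp_all
  have r: "inj (row \<psi> 0)" "inj (row \<psi>' 0)" "inj (row \<psi>'' 0)" using inj_rep_row ir by auto
  have ish: "inj_rep (length xs) (sh \<psi>)" "inj_rep (length xs) (sh \<psi>')" "inj_rep (length xs) (sh \<psi>'')"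
    using inj_rep_sh ir by auto
  have f: "act_m C (row \<psi>' 0) (row \<psi> 0) (c_id C x) \<in> hom C (act_o C (row \<psi> 0) x) (act_o C (row \<psi>' 0) x)"
    by (rule act_hom[OF r(1) r(2) id_hom[OF x]])
  have f': "act_m C (row \<psi>'' 0) (row \<psi>' 0) (c_id C x) \<in> hom C (act_o C (row \<psi>' 0) x) (act_o C (row \<psi>'' 0) x)"
    by (rule act_hom[OF r(2) r(3) id_hom[OF x]])
  have g: "brk C (sh \<psi>') (sh \<psi>) xs \<in> hom C (push C (sh \<psi>) xs) (push C (sh \<psi>') xs)"
    by (rule brk_hom[OF xs ish(1) ish(2)])
  have g': "brk C (sh \<psi>'') (sh \<psi>') xs \<in> hom C (push C (sh \<psi>') xs) (push C (sh \<psi>'') xs)"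
    by (rule brk_hom[OF xs ish(2) ish(3)])
  have d: "disj C (act_o C (row \<phi> 0) x) (push C (sh \<phi>) xs)" if "inj_rep (Suc (length xs)) \<phi>" for \<phi>
    by (rule good_disj[OF good_act[OF inj_rep_row[OF that] x] good_push[OF xs inj_rep_sh[OF that]] row_sh_disj[OF that]]) simp
  have "c_comp C (brk C \<psi>'' \<psi>' (x # xs)) (brk C \<psi>' \<psi> (x # xs)) =
     plus_m C (c_comp C (act_m C (row \<psi>'' 0) (row \<psi>' 0) (c_id C x)) (act_m C (row \<psi>' 0) (row \<psi> 0) (c_id C x)))
              (c_comp C (brk C (sh \<psi>'') (sh \<psi>') xs) (brk C (sh \<psi>') (sh \<psi>) xs))"
    unfolding brk_Cons by (rule plus_interchange[OF f g f' g' d[OF ir(1)] d[OF ir(2)] d[OF ir(3)], symmetric])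
  also have "\<dots> = brk C \<psi>'' \<psi> (x # xs)"
    unfolding brk_Cons Cons.hyps[OF xs ish(1) ish(2) ish(3)]
      act_comp[OF r(1) r(2) r(3) id_hom[OF x] id_hom[OF x]] id_left[OF id_hom[OF x]] ..
  finally show ?case .
qed

end


context PS
begin

lemma assoc': "f \<in> hom C X Y \<Longrightarrow> g \<in> hom C Y Z \<Longrightarrow> h \<in> hom C Z W \<Longrightarrow>
   c_comp C (c_comp C h g) f = c_comp C h (c_comp C g f)"
  using assoc by metis

lemma cls_mem: "(\<psi>', f', \<phi>') \<in> sig_cls C xs ys (\<psi>, f, \<phi>) \<longleftrightarrow>
  inj_rep (length xs) \<phi>' \<and> inj_rep (length ys) \<psi>' \<and>
  f' = c_comp C (brk C \<psi>' \<psi> ys) (c_comp C f (brk C \<phi> \<phi>' xs))"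
  unfolding sig_cls_def by auto

lemma T_hom:
  assumes xs: "xs \<in> lists (c_obj C)" and ys: "ys \<in> lists (c_obj C)"
    and i: "inj_rep (length xs) \<phi>" "inj_rep (length xs) \<phi>'" "inj_rep (length ys) \<psi>" "inj_rep (length ys) \<psi>'"
    and f: "f \<in> hom C (push C \<phi> xs) (push C \<psi> ys)"
  shows "c_comp C (brk C \<psi>' \<psi> ys) (c_comp C f (brk C \<phi> \<phi>' xs)) \<in> hom C (push C \<phi>' xs) (push C \<psi>' ys)"
  by (rule comp_hom[OF comp_hom[OF brk_hom[OF xs i(2) i(1)] f] brk_hom[OF ys i(3) i(4)]])

lemma T_self:
  assumes xs: "xs \<in> lists (c_obj C)" and ys: "ys \<in> lists (c_obj C)"
    and i: "inj_rep (length xs) \<phi>" "inj_rep (length ys) \<psi>"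
    and f: "f \<in> hom C (push C \<phi> xs) (push C \<psi> ys)"
  shows "c_comp C (brk C \<psi> \<psi> ys) (c_comp C f (brk C \<phi> \<phi> xs)) = f"
  unfolding brk_self[OF xs i(1)] brk_self[OF ys i(2)] id_right[OF f] id_left[OF f] ..

lemma T_T:
  assumes xs: "xs \<in> lists (c_obj C)" and ys: "ys \<in> lists (c_obj C)"
    and i: "inj_rep (length xs) \<phi>" "inj_rep (length xs) \<phi>'" "inj_rep (length xs) \<phi>''"
      "inj_rep (length ys) \<psi>" "inj_rep (length ys) \<psi>'" "inj_rep (length ys) \<psi>''"
    and f: "f \<in> hom C (push C \<phi> xs) (push C \<psi> ys)"
  shows "c_comp C (brk C \<psi>'' \<psi>' ys) (c_comp C (c_comp C (brk C \<psi>' \<psi> ys) (c_comp C f (brk C \<phi> \<phi>' xs))) (brk C \<phi>' \<phi>'' xs))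
       = c_comp C (brk C \<psi>'' \<psi> ys) (c_comp C f (brk C \<phi> \<phi>'' xs))"
proof -
  have a: "brk C \<phi>' \<phi>'' xs \<in> hom C (push C \<phi>'' xs) (push C \<phi>' xs)" by (rule brk_hom[OF xs i(3) i(2)])
  have b: "brk C \<phi> \<phi>' xs \<in> hom C (push C \<phi>' xs) (push C \<phi> xs)" by (rule brk_hom[OF xs i(2) i(1)])
  have c: "brk C \<psi>' \<psi> ys \<in> hom C (push C \<psi> ys) (push C \<psi>' ys)" by (rule brk_hom[OF ys i(4) i(5)])
  have d: "brk C \<psi>'' \<psi>' ys \<in> hom C (push C \<psi>' ys) (push C \<psi>'' ys)" by (rule brk_hom[OF ys i(5) i(6)])
  have fb: "c_comp C f (brk C \<phi> \<phi>' xs) \<in> hom C (push C \<phi>' xs) (push C \<psi> ys)" by (rule comp_hom[OF b f])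
  have ba: "c_comp C (brk C \<phi> \<phi>' xs) (brk C \<phi>' \<phi>'' xs) \<in> hom C (push C \<phi>'' xs) (push C \<phi> xs)"
    by (rule comp_hom[OF a b])
  have "c_comp C (c_comp C (brk C \<psi>' \<psi> ys) (c_comp C f (brk C \<phi> \<phi>' xs))) (brk C \<phi>' \<phi>'' xs)
     = c_comp C (brk C \<psi>' \<psi> ys) (c_comp C (c_comp C f (brk C \<phi> \<phi>' xs)) (brk C \<phi>' \<phi>'' xs))"
    by (rule assoc'[OF a fb c])
  also have "\<dots> = c_comp C (brk C \<psi>' \<psi> ys) (c_comp C f (brk C \<phi> \<phi>'' xs))"
    unfolding assoc'[OF a b f] brk_comp[OF xs i(3) i(2) i(1)] ..
  finally have "c_comp C (brk C \<psi>'' \<psi>' ys) (c_comp C (c_comp C (brk C \<psi>' \<psi> ys) (c_comp C f (brk C \<phi> \<phi>' xs))) (brk C \<phi>' \<phi>'' xs))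
      = c_comp C (brk C \<psi>'' \<psi>' ys) (c_comp C (brk C \<psi>' \<psi> ys) (c_comp C f (brk C \<phi> \<phi>'' xs)))" by simp
  also have "\<dots> = c_comp C (brk C \<psi>'' \<psi> ys) (c_comp C f (brk C \<phi> \<phi>'' xs))"
    unfolding assoc[OF comp_hom[OF brk_hom[OF xs i(3) i(1)] f] c d] brk_comp[OF ys i(4) i(5) i(6)] ..
  finally show ?thesis .
qed

lemma cls_eq:
  assumes xs: "xs \<in> lists (c_obj C)" and ys: "ys \<in> lists (c_obj C)"
    and r: "is_sig_rep C xs ys (\<psi>, f, \<phi>)" and r': "(\<psi>1, f1, \<phi>1) \<in> sig_cls C xs ys (\<psi>, f, \<phi>)"
  shows "sig_cls C xs ys (\<psi>1, f1, \<phi>1) = sig_cls C xs ys (\<psi>, f, \<phi>)"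
proof (rule set_eqI)
  fix t :: "'m sig_rep"
  obtain \<psi>' f' \<phi>' where t: "t = (\<psi>', f', \<phi>')" by (cases t) auto
  have i: "inj_rep (length xs) \<phi>" "inj_rep (length ys) \<psi>" and fh: "f \<in> hom C (push C \<phi> xs) (push C \<psi> ys)"
    using r by (auto simp: is_sig_rep_def)
  have i1: "inj_rep (length xs) \<phi>1" "inj_rep (length ys) \<psi>1"
    and f1: "f1 = c_comp C (brk C \<psi>1 \<psi> ys) (c_comp C f (brk C \<phi> \<phi>1 xs))" using r' by (auto simp: cls_mem)
  show "t \<in> sig_cls C xs ys (\<psi>1, f1, \<phi>1) \<longleftrightarrow> t \<in> sig_cls C xs ys (\<psi>, f, \<phi>)"
    unfolding t cls_mem f1 using T_T[OF xs ys i(1) i1(1) _ i(2) i1(2) _ fh] by auto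
qed

lemma T3:
  assumes xs: "xs \<in> lists (c_obj C)" and ys: "ys \<in> lists (c_obj C)" and zs: "zs \<in> lists (c_obj C)"
    and i: "inj_rep (length xs) \<phi>" "inj_rep (length xs) \<phi>'"
      "inj_rep (length ys) \<psi>" "inj_rep (length ys) \<psi>'" "inj_rep (length ys) \<theta>" "inj_rep (length ys) \<theta>'"
      "inj_rep (length zs) \<rho>" "inj_rep (length zs) \<rho>'"
    and f: "f \<in> hom C (push C \<phi> xs) (push C \<psi> ys)" and g: "g \<in> hom C (push C \<theta> ys) (push C \<rho> zs)"
  shows "c_comp C (c_comp C (brk C \<rho>' \<rho> zs) (c_comp C g (brk C \<theta> \<theta>' ys)))
           (c_comp C (brk C \<theta>' \<psi>' ys) (c_comp C (brk C \<psi>' \<psi> ys) (c_comp C f (brk C \<phi> \<phi>' xs))))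
       = c_comp C (brk C \<rho>' \<rho> zs) (c_comp C (c_comp C g (c_comp C (brk C \<theta> \<psi> ys) f)) (brk C \<phi> \<phi>' xs))"
proof -
  let ?a = "brk C \<phi> \<phi>' xs" and ?b = "brk C \<psi>' \<psi> ys" and ?c = "brk C \<theta>' \<psi>' ys"
    and ?d = "brk C \<theta> \<theta>' ys" and ?e = "brk C \<rho>' \<rho> zs" and ?B = "brk C \<theta> \<psi> ys"
  have a: "?a \<in> hom C (push C \<phi>' xs) (push C \<phi> xs)" by (rule brk_hom[OF xs i(2) i(1)])
  have b: "?b \<in> hom C (push C \<psi> ys) (push C \<psi>' ys)" by (rule brk_hom[OF ys i(3) i(4)])
  have c: "?c \<in> hom C (push C \<psi>' ys) (push C \<theta>' ys)" by (rule brk_hom[OF ys i(4) i(6)])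
  have d: "?d \<in> hom C (push C \<theta>' ys) (push C \<theta> ys)" by (rule brk_hom[OF ys i(6) i(5)])
  have e: "?e \<in> hom C (push C \<rho> zs) (push C \<rho>' zs)" by (rule brk_hom[OF zs i(7) i(8)])
  have B: "?B \<in> hom C (push C \<psi> ys) (push C \<theta> ys)" by (rule brk_hom[OF ys i(3) i(5)])
  have Beq: "?B = c_comp C ?d (c_comp C ?c ?b)"
    unfolding brk_comp[OF ys i(3) i(4) i(6)] brk_comp[OF ys i(3) i(6) i(5)] ..
  have F: "c_comp C f ?a \<in> hom C (push C \<phi>' xs) (push C \<psi> ys)" by (rule comp_hom[OF a f])
  have bF: "c_comp C ?b (c_comp C f ?a) \<in> hom C (push C \<phi>' xs) (push C \<psi>' ys)" by (rule comp_hom[OF F b])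
  have cbF: "c_comp C ?c (c_comp C ?b (c_comp C f ?a)) \<in> hom C (push C \<phi>' xs) (push C \<theta>' ys)" by (rule comp_hom[OF bF c])
  have dcbF: "c_comp C ?d (c_comp C ?c (c_comp C ?b (c_comp C f ?a))) \<in> hom C (push C \<phi>' xs) (push C \<theta> ys)"
    by (rule comp_hom[OF cbF d])
  have gd: "c_comp C g ?d \<in> hom C (push C \<theta>' ys) (push C \<rho> zs)" by (rule comp_hom[OF d g])
  have cb: "c_comp C ?c ?b \<in> hom C (push C \<psi> ys) (push C \<theta>' ys)" by (rule comp_hom[OF b c])
  have Bf: "c_comp C ?B f \<in> hom C (push C \<phi> xs) (push C \<theta> ys)" by (rule comp_hom[OF f B])
  have L: "c_comp C (c_comp C ?e (c_comp C g ?d)) (c_comp C ?c (c_comp C ?b (c_comp C f ?a)))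
      = c_comp C ?e (c_comp C g (c_comp C ?d (c_comp C ?c (c_comp C ?b (c_comp C f ?a)))))"
    unfolding assoc'[OF cbF gd e] assoc'[OF cbF d g] ..
  have "c_comp C (c_comp C g (c_comp C ?B f)) ?a = c_comp C g (c_comp C (c_comp C ?B f) ?a)"
    by (rule assoc'[OF a Bf g])
  also have "\<dots> = c_comp C g (c_comp C ?B (c_comp C f ?a))" unfolding assoc'[OF a f B] ..
  also have "c_comp C ?B (c_comp C f ?a) = c_comp C ?d (c_comp C ?c (c_comp C ?b (c_comp C f ?a)))"
    unfolding Beq assoc'[OF F cb d] assoc'[OF F b c] ..
  finally have R: "c_comp C (c_comp C g (c_comp C ?B f)) ?a =
      c_comp C g (c_comp C ?d (c_comp C ?c (c_comp C ?b (c_comp C f ?a))))" .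
  show ?thesis unfolding L R ..
qed

end

locale PSP = PS +
  fixes \<phi> :: "nat \<times> nat \<Rightarrow> nat"
  assumes injphi: "inj \<phi>"
begin

lemma Theta_simps:
  "c_obj (Theta C) = theta_obj C"
  "c_arr (Theta C) = {(P, Q, c). P \<in> theta_obj C \<and> Q \<in> theta_obj C \<and> (tens P, tens Q, c) \<in> sig_arrs C}"
  "c_dom (Theta C) = (\<lambda>\<alpha>. fst \<alpha>)"
  "c_cod (Theta C) = (\<lambda>\<alpha>. fst (snd \<alpha>))"
  "c_id (Theta C) = (\<lambda>P. (P, P, snd (snd (sig_id C (tens P)))))"
  "c_comp (Theta C) = (\<lambda>\<beta> \<alpha>. (fst \<alpha>, fst (snd \<beta>),
        snd (snd (sig_comp C (tens (fst \<beta>), tens (fst (snd \<beta>)), snd (snd \<beta>))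
                             (tens (fst \<alpha>), tens (fst (snd \<alpha>)), snd (snd \<alpha>))))))"
  by (simp_all add: Theta_def)

lemma tens_lists: "P \<in> theta_obj C \<Longrightarrow> tens P \<in> lists (c_obj C)"
  unfolding theta_obj_def tens_def by force

lemma tens_len: assumes "P \<in> theta_obj C"
  shows "length (tens P) = length (sorted_list_of_set {i. P i \<noteq> []})"
proof -
  let ?L = "sorted_list_of_set {i. P i \<noteq> []}"
  have fin: "finite {i. P i \<noteq> []}" and le: "\<And>i. length (P i) \<le> 1" using assms by (auto simp: theta_obj_def)
  have eq: "map length (map P ?L) = map (\<lambda>_. 1::nat) ?L"
  proof (rule nth_equalityI)
    fix k assume "k < length (map length (map P ?L))"
    then have "?L ! k \<in> set ?L" by simp
    then have "P (?L ! k) \<noteq> []" using fin by simp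
    then have "length (P (?L ! k)) = 1" using le[of "?L ! k"] by (cases "P (?L ! k)") auto
    then show "map length (map P ?L) ! k = map (\<lambda>_. 1) ?L ! k" using \<open>k < _\<close> by simp
  qed simp
  have "length (tens P) = sum_list (map length (map P ?L))" unfolding tens_def length_concat ..
  also have "\<dots> = sum_list (map (\<lambda>_. 1::nat) ?L)" unfolding eq ..
  also have "\<dots> = length ?L" by (simp add: sum_list_triv)
  finally show ?thesis .
qed

lemma theta_inj_rep: assumes "P \<in> theta_obj C" shows "inj_rep (length (tens P)) (theta_inj \<phi> P)"
  unfolding inj_rep_def tens_len[OF assms]
proof (rule inj_onI)
  let ?L = "sorted_list_of_set {i. P i \<noteq> []}"
  fix x y assume x: "x \<in> {..<length ?L} \<times> (UNIV :: nat set)" and y: "y \<in> {..<length ?L} \<times> (UNIV :: nat set)"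
    and e: "theta_inj \<phi> P x = theta_inj \<phi> P y"
  obtain a n where xa: "x = (a, n)" by (cases x)
  obtain b m where yb: "y = (b, m)" by (cases y)
  have "(?L ! a, n) = (?L ! b, m)" using e injphi unfolding xa yb theta_inj_def by (simp add: inj_eq)
  moreover have "distinct ?L" by simp
  ultimately show "x = y" using x y unfolding xa yb by (auto simp: nth_eq_iff_index_eq)
qed

lemma S_obj_ob: "P \<in> theta_obj C \<Longrightarrow> S_obj \<phi> C P \<in> c_obj C"
  unfolding S_obj_def by (rule push_ob[OF tens_lists theta_inj_rep])

lemma S_arr_simp: "S_arr \<phi> C (P, Q, c) = (THE f. (theta_inj \<phi> Q, f, theta_inj \<phi> P) \<in> c)"
  by (simp add: S_arr_def)

definition mk where
  "mk P Q h = (P, Q, sig_cls C (tens P) (tens Q) (theta_inj \<phi> Q, h, theta_inj \<phi> P))"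

lemma mk_arr:
  assumes P: "P \<in> theta_obj C" and Q: "Q \<in> theta_obj C" and h: "h \<in> hom C (S_obj \<phi> C P) (S_obj \<phi> C Q)"
  shows "mk P Q h \<in> c_arr (Theta C)" and "S_arr \<phi> C (mk P Q h) = h"
proof -
  have r: "is_sig_rep C (tens P) (tens Q) (theta_inj \<phi> Q, h, theta_inj \<phi> P)"
    using theta_inj_rep[OF P] theta_inj_rep[OF Q] h by (simp add: is_sig_rep_def S_obj_def)
  show "mk P Q h \<in> c_arr (Theta C)" unfolding Theta_simps mk_def sig_arrs_def
    using P Q tens_lists[OF P] tens_lists[OF Q] r by blast
  have hh: "h \<in> hom C (push C (theta_inj \<phi> P) (tens P)) (push C (theta_inj \<phi> Q) (tens Q))"
    using h by (simp add: S_obj_def)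
  note Ts = T_self[OF tens_lists[OF P] tens_lists[OF Q] theta_inj_rep[OF P] theta_inj_rep[OF Q] hh]
  show "S_arr \<phi> C (mk P Q h) = h" unfolding S_arr_simp mk_def
    by (rule the_equality) (auto simp: cls_mem Ts theta_inj_rep[OF P] theta_inj_rep[OF Q])
qed

lemma arr_mk:
  assumes \<alpha>: "\<alpha> \<in> c_arr (Theta C)"
  shows "fst \<alpha> \<in> theta_obj C" "fst (snd \<alpha>) \<in> theta_obj C"
    "S_arr \<phi> C \<alpha> \<in> hom C (S_obj \<phi> C (fst \<alpha>)) (S_obj \<phi> C (fst (snd \<alpha>)))"
    "\<alpha> = mk (fst \<alpha>) (fst (snd \<alpha>)) (S_arr \<phi> C \<alpha>)"
proof -
  obtain P Q c where a: "\<alpha> = (P, Q, c)" by (cases \<alpha>) auto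
  have P: "P \<in> theta_obj C" and Q: "Q \<in> theta_obj C" and sa: "(tens P, tens Q, c) \<in> sig_arrs C"
    using \<alpha> unfolding a Theta_simps by auto
  then obtain r where r: "is_sig_rep C (tens P) (tens Q) r" and c: "c = sig_cls C (tens P) (tens Q) r"
    unfolding sig_arrs_def by auto
  obtain \<psi> f \<phi>0 where rr: "r = (\<psi>, f, \<phi>0)" by (cases r) auto
  have i: "inj_rep (length (tens P)) \<phi>0" "inj_rep (length (tens Q)) \<psi>"
    and fh: "f \<in> hom C (push C \<phi>0 (tens P)) (push C \<psi> (tens Q))" using r unfolding rr is_sig_rep_def by auto
  define f0 where "f0 = c_comp C (brk C (theta_inj \<phi> Q) \<psi> (tens Q)) (c_comp C f (brk C \<phi>0 (theta_inj \<phi> P) (tens P)))"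
  have mem: "(theta_inj \<phi> Q, f0, theta_inj \<phi> P) \<in> c"
    unfolding c rr cls_mem f0_def using theta_inj_rep[OF P] theta_inj_rep[OF Q] by simp
  have S: "S_arr \<phi> C \<alpha> = f0" unfolding a S_arr_simp
    by (rule the_equality[OF _ ]) (use mem in \<open>auto simp: c rr cls_mem f0_def\<close>)
  have f0h: "f0 \<in> hom C (S_obj \<phi> C P) (S_obj \<phi> C Q)" unfolding f0_def S_obj_def
    by (rule T_hom[OF tens_lists[OF P] tens_lists[OF Q] i(1) theta_inj_rep[OF P] i(2) theta_inj_rep[OF Q] fh])
  have ceq: "c = sig_cls C (tens P) (tens Q) (theta_inj \<phi> Q, f0, theta_inj \<phi> P)"
    using cls_eq[OF tens_lists[OF P] tens_lists[OF Q] r[unfolded rr] mem[unfolded c rr]] c rr by simp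
  show "fst \<alpha> \<in> theta_obj C" "fst (snd \<alpha>) \<in> theta_obj C" using P Q a by auto
  show "S_arr \<phi> C \<alpha> \<in> hom C (S_obj \<phi> C (fst \<alpha>)) (S_obj \<phi> C (fst (snd \<alpha>)))" using S f0h a by simp
  show "\<alpha> = mk (fst \<alpha>) (fst (snd \<alpha>)) (S_arr \<phi> C \<alpha>)" unfolding mk_def using a S ceq by simp
qed

end


lemma is_functorI:
  assumes "is_cat A" "is_cat B" "\<forall>X\<in>c_obj A. Fo X \<in> c_obj B"
    "\<forall>f\<in>c_arr A. Fm f \<in> hom B (Fo (c_dom A f)) (Fo (c_cod A f))"
    "\<forall>X\<in>c_obj A. Fm (c_id A X) = c_id B (Fo X)"
    "\<forall>f\<in>c_arr A. \<forall>g\<in>c_arr A. c_cod A f = c_dom A g \<longrightarrow> Fm (c_comp A g f) = c_comp B (Fm g) (Fm f)"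
  shows "is_functor A B Fo Fm"
  using assms unfolding is_functor_def by (intro conjI)

lemma nat_isoI:
  assumes "\<forall>X\<in>c_obj A. eta X \<in> hom B (Fo X) (Go X) \<and> is_iso B (eta X)"
    "\<forall>f\<in>c_arr A. c_comp B (Gm f) (eta (c_dom A f)) = c_comp B (eta (c_cod A f)) (Fm f)"
  shows "nat_iso A B Fo Fm Go Gm eta"
  using assms unfolding nat_iso_def by (intro conjI)

lemma is_isoI:
  assumes "f \<in> hom C X Y" "g \<in> hom C Y X" "c_comp C g f = c_id C X" "c_comp C f g = c_id C Y"
  shows "is_iso C f"
  using assms unfolding is_iso_def hom_def by auto

context PSP
begin

lemma Theta_hom_iff: "\<alpha> \<in> hom (Theta C) X Y \<longleftrightarrow> \<alpha> \<in> c_arr (Theta C) \<and> fst \<alpha> = X \<and> fst (snd \<alpha>) = Y"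
  by (simp add: hom_def Theta_simps)

lemma mk_dom[simp]: "fst (mk P Q h) = P" and mk_cod[simp]: "fst (snd (mk P Q h)) = Q"
  by (simp_all add: mk_def)

lemma mk_hom:
  "P \<in> theta_obj C \<Longrightarrow> Q \<in> theta_obj C \<Longrightarrow> h \<in> hom C (S_obj \<phi> C P) (S_obj \<phi> C Q) \<Longrightarrow>
   mk P Q h \<in> hom (Theta C) P Q"
  using mk_arr by (simp add: Theta_hom_iff)

lemma arr_cases:
  assumes "\<alpha> \<in> c_arr (Theta C)"
  obtains P Q f where "\<alpha> = mk P Q f" "P \<in> theta_obj C" "Q \<in> theta_obj C"
    "f \<in> hom C (S_obj \<phi> C P) (S_obj \<phi> C Q)" "S_arr \<phi> C \<alpha> = f"
  using arr_mk[OF assms] by metis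

lemma mk_eq_iff:
  "P \<in> theta_obj C \<Longrightarrow> Q \<in> theta_obj C \<Longrightarrow> h \<in> hom C (S_obj \<phi> C P) (S_obj \<phi> C Q) \<Longrightarrow>
   h' \<in> hom C (S_obj \<phi> C P) (S_obj \<phi> C Q) \<Longrightarrow> mk P Q h = mk P Q h' \<longleftrightarrow> h = h'"
  using mk_arr(2) by metis

lemma inj_rep_pe: "inj_rep n prod_encode"
  unfolding inj_rep_def by (rule inj_prod_encode)

lemma id_mk: assumes P: "P \<in> theta_obj C" shows "c_id (Theta C) P = mk P P (c_id C (S_obj \<phi> C P))"
proof -
  let ?xs = "tens P" and ?t = "theta_inj \<phi> P"
  have xs: "?xs \<in> lists (c_obj C)" by (rule tens_lists[OF P])
  have it: "inj_rep (length ?xs) ?t" by (rule theta_inj_rep[OF P])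
  have ip: "inj_rep (length ?xs) prod_encode" by (rule inj_rep_pe)
  have pob: "push C prod_encode ?xs \<in> c_obj C" by (rule push_ob[OF xs ip])
  have r: "is_sig_rep C ?xs ?xs (prod_encode, c_id C (push C prod_encode ?xs), prod_encode)"
    unfolding is_sig_rep_def using ip id_hom[OF pob] by simp
  have "c_comp C (brk C ?t prod_encode ?xs) (c_comp C (c_id C (push C prod_encode ?xs)) (brk C prod_encode ?t ?xs))
     = c_id C (S_obj \<phi> C P)"
    unfolding id_left[OF brk_hom[OF xs it ip]] brk_comp[OF xs it ip it] brk_self[OF xs it] S_obj_def ..
  then have mem: "(?t, c_id C (S_obj \<phi> C P), ?t) \<in> sig_cls C ?xs ?xs (prod_encode, c_id C (push C prod_encode ?xs), prod_encode)"
    unfolding cls_mem using it by simp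
  show ?thesis unfolding Theta_simps mk_def sig_id_def using cls_eq[OF xs xs r mem] by simp
qed

lemma comp_mk:
  assumes P: "P \<in> theta_obj C" and Q: "Q \<in> theta_obj C" and R: "R \<in> theta_obj C"
    and f: "f \<in> hom C (S_obj \<phi> C P) (S_obj \<phi> C Q)" and g: "g \<in> hom C (S_obj \<phi> C Q) (S_obj \<phi> C R)"
  shows "c_comp (Theta C) (mk Q R g) (mk P Q f) = mk P R (c_comp C g f)"
proof -
  let ?xs = "tens P" and ?ys = "tens Q" and ?zs = "tens R"
    and ?tP = "theta_inj \<phi> P" and ?tQ = "theta_inj \<phi> Q" and ?tR = "theta_inj \<phi> R"
  define c1 where "c1 = sig_cls C ?xs ?ys (?tQ, f, ?tP)"
  define c2 where "c2 = sig_cls C ?ys ?zs (?tR, g, ?tQ)"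
  have xs: "?xs \<in> lists (c_obj C)" and ys: "?ys \<in> lists (c_obj C)" and zs: "?zs \<in> lists (c_obj C)"
    using tens_lists P Q R by auto
  have iP: "inj_rep (length ?xs) ?tP" and iQ: "inj_rep (length ?ys) ?tQ" and iR: "inj_rep (length ?zs) ?tR"
    using theta_inj_rep P Q R by auto
  have fh: "f \<in> hom C (push C ?tP ?xs) (push C ?tQ ?ys)" using f by (simp add: S_obj_def)
  have gh: "g \<in> hom C (push C ?tQ ?ys) (push C ?tR ?zs)" using g by (simp add: S_obj_def)
  have m1: "(?tQ, f, ?tP) \<in> c1" unfolding c1_def cls_mem using T_self[OF xs ys iP iQ fh] iP iQ by simp
  have m2: "(?tR, g, ?tQ) \<in> c2" unfolding c2_def cls_mem using T_self[OF ys zs iQ iR gh] iQ iR by simp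
  obtain \<psi> f1 \<phi>1 where e1: "(SOME r. r \<in> c1) = (\<psi>, f1, \<phi>1)" by (cases "SOME r. r \<in> c1") auto
  obtain \<rho> g1 \<theta>1 where e2: "(SOME r. r \<in> c2) = (\<rho>, g1, \<theta>1)" by (cases "SOME r. r \<in> c2") auto
  have s1: "(\<psi>, f1, \<phi>1) \<in> c1" using someI[of "\<lambda>r. r \<in> c1", OF m1] e1 by simp
  have s2: "(\<rho>, g1, \<theta>1) \<in> c2" using someI[of "\<lambda>r. r \<in> c2", OF m2] e2 by simp
  have i1: "inj_rep (length ?xs) \<phi>1" "inj_rep (length ?ys) \<psi>"
    and f1: "f1 = c_comp C (brk C \<psi> ?tQ ?ys) (c_comp C f (brk C ?tP \<phi>1 ?xs))"
    using s1 unfolding c1_def cls_mem by auto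
  have i2: "inj_rep (length ?ys) \<theta>1" "inj_rep (length ?zs) \<rho>"
    and g1: "g1 = c_comp C (brk C \<rho> ?tR ?zs) (c_comp C g (brk C ?tQ \<theta>1 ?ys))"
    using s2 unfolding c2_def cls_mem by auto
  have sc: "c_comp (Theta C) (mk Q R g) (mk P Q f) =
     (P, R, sig_cls C ?xs ?zs (\<rho>, c_comp C g1 (c_comp C (brk C \<theta>1 \<psi> ?ys) f1), \<phi>1))"
    unfolding Theta_simps mk_def sig_comp_def using e1 e2 by (simp add: c1_def[symmetric] c2_def[symmetric])
  have gf: "c_comp C g f \<in> hom C (push C ?tP ?xs) (push C ?tR ?zs)" by (rule comp_hom[OF fh gh])
  have r: "is_sig_rep C ?xs ?zs (?tR, c_comp C g f, ?tP)" unfolding is_sig_rep_def using iP iR gf by simp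
  have T: "c_comp C g1 (c_comp C (brk C \<theta>1 \<psi> ?ys) f1) =
      c_comp C (brk C \<rho> ?tR ?zs) (c_comp C (c_comp C g f) (brk C ?tP \<phi>1 ?xs))"
    using T3[OF xs ys zs iP i1(1) iQ i1(2) iQ i2(1) iR i2(2) fh gh]
    unfolding f1 g1 brk_self[OF ys iQ] id_left[OF fh] by simp
  have mem: "(\<rho>, c_comp C g1 (c_comp C (brk C \<theta>1 \<psi> ?ys) f1), \<phi>1) \<in> sig_cls C ?xs ?zs (?tR, c_comp C g f, ?tP)"
    unfolding cls_mem T using i1 i2 by simp
  show ?thesis unfolding sc cls_eq[OF xs zs r mem] by (simp add: mk_def)
qed

lemma Theta_cat: "is_cat (Theta C)"
proof (rule is_catI)
  show "\<forall>f\<in>c_arr (Theta C). c_dom (Theta C) f \<in> c_obj (Theta C) \<and> c_cod (Theta C) f \<in> c_obj (Theta C)"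
    using arr_mk(1,2) by (simp add: Theta_simps(1,3,4))
  show "\<forall>X\<in>c_obj (Theta C). c_id (Theta C) X \<in> hom (Theta C) X X"
    using id_mk mk_hom id_hom S_obj_ob by (simp add: Theta_simps(1))
  show "\<forall>f\<in>c_arr (Theta C). \<forall>g\<in>c_arr (Theta C). c_cod (Theta C) f = c_dom (Theta C) g \<longrightarrow>
         c_comp (Theta C) g f \<in> hom (Theta C) (c_dom (Theta C) f) (c_cod (Theta C) g)"
  proof (intro ballI impI)
    fix \<alpha> \<beta> assume a: "\<alpha> \<in> c_arr (Theta C)" and b: "\<beta> \<in> c_arr (Theta C)"
      and ab: "c_cod (Theta C) \<alpha> = c_dom (Theta C) \<beta>"
    obtain P Q f where A: "\<alpha> = mk P Q f" "P \<in> theta_obj C" "Q \<in> theta_obj C" "f \<in> hom C (S_obj \<phi> C P) (S_obj \<phi> C Q)"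
      using arr_cases[OF a] by metis
    obtain Q' R g where B: "\<beta> = mk Q' R g" "Q' \<in> theta_obj C" "R \<in> theta_obj C" "g \<in> hom C (S_obj \<phi> C Q') (S_obj \<phi> C R)"
      using arr_cases[OF b] by metis
    have "Q' = Q" using ab A B by (simp add: Theta_simps)
    then show "c_comp (Theta C) \<beta> \<alpha> \<in> hom (Theta C) (c_dom (Theta C) \<alpha>) (c_cod (Theta C) \<beta>)"
      using A B comp_mk mk_hom comp_hom by (simp add: Theta_simps(3,4))
  qed
  show "\<forall>f\<in>c_arr (Theta C). c_comp (Theta C) f (c_id (Theta C) (c_dom (Theta C) f)) = f \<and>
      c_comp (Theta C) (c_id (Theta C) (c_cod (Theta C) f)) f = f"
  proof
    fix \<alpha> assume a: "\<alpha> \<in> c_arr (Theta C)"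
    obtain P Q f where A: "\<alpha> = mk P Q f" "P \<in> theta_obj C" "Q \<in> theta_obj C" "f \<in> hom C (S_obj \<phi> C P) (S_obj \<phi> C Q)"
      using arr_cases[OF a] by metis
    show "c_comp (Theta C) \<alpha> (c_id (Theta C) (c_dom (Theta C) \<alpha>)) = \<alpha> \<and>
      c_comp (Theta C) (c_id (Theta C) (c_cod (Theta C) \<alpha>)) \<alpha> = \<alpha>"
      using A comp_mk id_mk id_hom S_obj_ob id_left id_right by (simp add: Theta_simps(3,4))
  qed
  show "\<forall>f\<in>c_arr (Theta C). \<forall>g\<in>c_arr (Theta C). \<forall>h\<in>c_arr (Theta C).
     c_cod (Theta C) f = c_dom (Theta C) g \<and> c_cod (Theta C) g = c_dom (Theta C) h \<longrightarrow>
     c_comp (Theta C) h (c_comp (Theta C) g f) = c_comp (Theta C) (c_comp (Theta C) h g) f"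
  proof (intro ballI impI)
    fix \<alpha> \<beta> \<gamma> assume a: "\<alpha> \<in> c_arr (Theta C)" and b: "\<beta> \<in> c_arr (Theta C)" and c: "\<gamma> \<in> c_arr (Theta C)"
      and abc: "c_cod (Theta C) \<alpha> = c_dom (Theta C) \<beta> \<and> c_cod (Theta C) \<beta> = c_dom (Theta C) \<gamma>"
    obtain P Q f where A: "\<alpha> = mk P Q f" "P \<in> theta_obj C" "Q \<in> theta_obj C" "f \<in> hom C (S_obj \<phi> C P) (S_obj \<phi> C Q)"
      using arr_cases[OF a] by metis
    obtain Q' R g where B: "\<beta> = mk Q' R g" "Q' \<in> theta_obj C" "R \<in> theta_obj C" "g \<in> hom C (S_obj \<phi> C Q') (S_obj \<phi> C R)"
      using arr_cases[OF b] by metis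
    obtain R' W h where G: "\<gamma> = mk R' W h" "R' \<in> theta_obj C" "W \<in> theta_obj C" "h \<in> hom C (S_obj \<phi> C R') (S_obj \<phi> C W)"
      using arr_cases[OF c] by metis
    have e: "Q' = Q" "R' = R" using abc A B G by (simp_all add: Theta_simps)
    have gf: "c_comp C g f \<in> hom C (S_obj \<phi> C P) (S_obj \<phi> C R)" using comp_hom A B e by simp
    have hg: "c_comp C h g \<in> hom C (S_obj \<phi> C Q) (S_obj \<phi> C W)" using comp_hom B G e by simp
    show "c_comp (Theta C) \<gamma> (c_comp (Theta C) \<beta> \<alpha>) = c_comp (Theta C) (c_comp (Theta C) \<gamma> \<beta>) \<alpha>"
      unfolding A(1) B(1) G(1) e comp_mk[OF A(2,3) B(3) A(4) B(4)[unfolded e]]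
        comp_mk[OF B(2)[unfolded e] B(3) G(3) B(4)[unfolded e] G(4)[unfolded e]]
        comp_mk[OF A(2) B(3) G(3) gf G(4)[unfolded e]] comp_mk[OF A(2,3) G(3) A(4) hg]
        assoc[OF A(4) B(4)[unfolded e] G(4)[unfolded e]] ..
  qed
qed

end


context PSP
begin

lemma S_functor: "is_functor (Theta C) C (S_obj \<phi> C) (S_arr \<phi> C)"
proof (rule is_functorI[OF Theta_cat cat])
  show "\<forall>X\<in>c_obj (Theta C). S_obj \<phi> C X \<in> c_obj C" using S_obj_ob by (simp add: Theta_simps)
  show "\<forall>f\<in>c_arr (Theta C). S_arr \<phi> C f \<in> hom C (S_obj \<phi> C (c_dom (Theta C) f)) (S_obj \<phi> C (c_cod (Theta C) f))"
    using arr_mk(3) by (simp add: Theta_simps(3,4))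
  show "\<forall>X\<in>c_obj (Theta C). S_arr \<phi> C (c_id (Theta C) X) = c_id C (S_obj \<phi> C X)"
  proof
    fix P assume "P \<in> c_obj (Theta C)"
    then have P: "P \<in> theta_obj C" by (simp add: Theta_simps)
    show "S_arr \<phi> C (c_id (Theta C) P) = c_id C (S_obj \<phi> C P)"
      unfolding id_mk[OF P] by (rule mk_arr(2)[OF P P id_hom[OF S_obj_ob[OF P]]])
  qed
  show "\<forall>f\<in>c_arr (Theta C). \<forall>g\<in>c_arr (Theta C). c_cod (Theta C) f = c_dom (Theta C) g \<longrightarrow>
      S_arr \<phi> C (c_comp (Theta C) g f) = c_comp C (S_arr \<phi> C g) (S_arr \<phi> C f)"
  proof (intro ballI impI)
    fix \<alpha> \<beta> assume a: "\<alpha> \<in> c_arr (Theta C)" and b: "\<beta> \<in> c_arr (Theta C)"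
      and ab: "c_cod (Theta C) \<alpha> = c_dom (Theta C) \<beta>"
    obtain P Q f where A: "\<alpha> = mk P Q f" "P \<in> theta_obj C" "Q \<in> theta_obj C" "f \<in> hom C (S_obj \<phi> C P) (S_obj \<phi> C Q)"
      using arr_cases[OF a] by metis
    obtain Q' R g where B: "\<beta> = mk Q' R g" "Q' \<in> theta_obj C" "R \<in> theta_obj C" "g \<in> hom C (S_obj \<phi> C Q') (S_obj \<phi> C R)"
      using arr_cases[OF b] by metis
    have e: "Q' = Q" using ab A B by (simp add: Theta_simps)
    show "S_arr \<phi> C (c_comp (Theta C) \<beta> \<alpha>) = c_comp C (S_arr \<phi> C \<beta>) (S_arr \<phi> C \<alpha>)"
      unfolding A(1) B(1) e comp_mk[OF A(2,3) B(3) A(4) B(4)[unfolded e]]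
        mk_arr(2)[OF A(2,3) A(4)] mk_arr(2)[OF A(3) B(3) B(4)[unfolded e]]
      by (rule mk_arr(2)[OF A(2) B(3) comp_hom[OF A(4) B(4)[unfolded e]]])
  qed
qed

definition e0 where "e0 = (\<lambda>n. \<phi> (0, n))"

lemma inj_e0: "inj e0"
proof (rule injI)
  fix x y assume "e0 x = e0 y" then have "(0::nat, x) = (0, y)" using injphi unfolding e0_def by (simp add: inj_eq)
  then show "x = y" by simp
qed

definition Go where "Go X = (\<lambda>i::nat. if i = 0 then [X] else [])"

definition Gm where "Gm f = mk (Go (c_dom C f)) (Go (c_cod C f)) (act_m C e0 e0 f)"

lemma Go_nz: "{i. Go X i \<noteq> []} = {0}" by (auto simp: Go_def)

lemma Go_obj: "X \<in> c_obj C \<Longrightarrow> Go X \<in> theta_obj C"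
  unfolding theta_obj_def Go_nz by (simp add: Go_def)

lemma S_Go: assumes X: "X \<in> c_obj C" shows "S_obj \<phi> C (Go X) = act_o C e0 X"
proof -
  have t: "tens (Go X) = [X]" unfolding tens_def Go_nz by (simp add: Go_def)
  have r: "row (theta_inj \<phi> (Go X)) 0 = e0" unfolding row_def theta_inj_def Go_nz e0_def by simp
  show ?thesis unfolding S_obj_def t push_Cons push_Nil r by (rule plus_zero[OF act_ob[OF inj_e0 X]])
qed

lemma Go_hom: assumes fh: "f \<in> hom C X Y" shows "act_m C e0 e0 f \<in> hom C (S_obj \<phi> C (Go X)) (S_obj \<phi> C (Go Y))"
proof -
  have X: "X \<in> c_obj C" and Y: "Y \<in> c_obj C" using arr_ob[OF fh] by auto
  show ?thesis unfolding S_Go[OF X] S_Go[OF Y] by (rule act_hom[OF inj_e0 inj_e0 fh])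
qed

lemma G_functor: "is_functor C (Theta C) Go Gm"
proof (rule is_functorI[OF cat Theta_cat])
  show "\<forall>X\<in>c_obj C. Go X \<in> c_obj (Theta C)" using Go_obj by (simp add: Theta_simps)
  show "\<forall>f\<in>c_arr C. Gm f \<in> hom (Theta C) (Go (c_dom C f)) (Go (c_cod C f))"
  proof
    fix f assume f: "f \<in> c_arr C"
    then have fh: "f \<in> hom C (c_dom C f) (c_cod C f)" by (simp add: hom_def)
    show "Gm f \<in> hom (Theta C) (Go (c_dom C f)) (Go (c_cod C f))"
      unfolding Gm_def using mk_hom Go_obj arr_ob[OF fh] Go_hom[OF fh] by simp
  qed
  show "\<forall>X\<in>c_obj C. Gm (c_id C X) = c_id (Theta C) (Go X)"
  proof
    fix X assume X: "X \<in> c_obj C"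
    have ih: "c_id C X \<in> hom C X X" by (rule id_hom[OF X])
    show "Gm (c_id C X) = c_id (Theta C) (Go X)"
      unfolding Gm_def id_mk[OF Go_obj[OF X]] using ih act_id[OF inj_e0 X] S_Go[OF X]
      by (simp add: hom_def)
  qed
  show "\<forall>f\<in>c_arr C. \<forall>g\<in>c_arr C. c_cod C f = c_dom C g \<longrightarrow> Gm (c_comp C g f) = c_comp (Theta C) (Gm g) (Gm f)"
  proof (intro ballI impI)
    fix f g assume f: "f \<in> c_arr C" and g: "g \<in> c_arr C" and fg: "c_cod C f = c_dom C g"
    have fh: "f \<in> hom C (c_dom C f) (c_cod C f)" using f by (simp add: hom_def)
    have gh: "g \<in> hom C (c_cod C f) (c_cod C g)" using g fg by (simp add: hom_def)
    have gfh: "c_comp C g f \<in> hom C (c_dom C f) (c_cod C g)" by (rule comp_hom[OF fh gh])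
    then have dc: "c_dom C (c_comp C g f) = c_dom C f" "c_cod C (c_comp C g f) = c_cod C g" by (simp_all add: hom_def)
    have ob: "c_dom C f \<in> c_obj C" "c_cod C f \<in> c_obj C" "c_cod C g \<in> c_obj C" using arr_ob fh gh by auto
    show "Gm (c_comp C g f) = c_comp (Theta C) (Gm g) (Gm f)"
      unfolding Gm_def dc fg[symmetric]
        comp_mk[OF Go_obj[OF ob(1)] Go_obj[OF ob(2)] Go_obj[OF ob(3)] Go_hom[OF fh] Go_hom[OF gh]]
        act_comp[OF inj_e0 inj_e0 inj_e0 fh gh] ..
  qed
qed

end


context PSP
begin

lemma inj_id': "inj (id :: nat \<Rightarrow> nat)" by simp

lemma h1_hom: "Y \<in> c_obj C \<Longrightarrow> act_m C e0 id (c_id C Y) \<in> hom C Y (act_o C e0 Y)"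
  using act_hom[OF inj_id' inj_e0 id_hom, of Y] act_o_id by simp
lemma h2_hom: "Y \<in> c_obj C \<Longrightarrow> act_m C id e0 (c_id C Y) \<in> hom C (act_o C e0 Y) Y"
  using act_hom[OF inj_e0 inj_id' id_hom, of Y] act_o_id by simp
lemma h21: "Y \<in> c_obj C \<Longrightarrow> c_comp C (act_m C id e0 (c_id C Y)) (act_m C e0 id (c_id C Y)) = c_id C Y"
  using act_comp[OF inj_id' inj_e0 inj_id' id_hom id_hom, of Y] id_left[OF id_hom, of Y]
    act_m_id[of "c_id C Y"] id_hom[of Y] by (simp add: hom_def)
lemma h12: "Y \<in> c_obj C \<Longrightarrow> c_comp C (act_m C e0 id (c_id C Y)) (act_m C id e0 (c_id C Y)) = c_id C (act_o C e0 Y)"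
  using act_comp[OF inj_e0 inj_id' inj_e0 id_hom id_hom, of Y] id_left[OF id_hom, of Y]
    act_id[OF inj_e0] by simp

definition eta where "eta P = mk P (Go (S_obj \<phi> C P)) (act_m C e0 id (c_id C (S_obj \<phi> C P)))"
definition eps where "eps X = act_m C id e0 (c_id C X)"

lemma eta_iso: "nat_iso (Theta C) (Theta C) (\<lambda>X. X) (\<lambda>f. f) (Go \<circ> S_obj \<phi> C) (Gm \<circ> S_arr \<phi> C) eta"
proof (rule nat_isoI)
  show "\<forall>X\<in>c_obj (Theta C). eta X \<in> hom (Theta C) X ((Go \<circ> S_obj \<phi> C) X) \<and> is_iso (Theta C) (eta X)"
  proof
    fix P assume "P \<in> c_obj (Theta C)"
    then have P: "P \<in> theta_obj C" by (simp add: Theta_simps)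
    let ?Y = "S_obj \<phi> C P"
    have Y: "?Y \<in> c_obj C" by (rule S_obj_ob[OF P])
    have GY: "Go ?Y \<in> theta_obj C" by (rule Go_obj[OF Y])
    have h1: "act_m C e0 id (c_id C ?Y) \<in> hom C (S_obj \<phi> C P) (S_obj \<phi> C (Go ?Y))"
      unfolding S_Go[OF Y] by (rule h1_hom[OF Y])
    have h2: "act_m C id e0 (c_id C ?Y) \<in> hom C (S_obj \<phi> C (Go ?Y)) (S_obj \<phi> C P)"
      unfolding S_Go[OF Y] by (rule h2_hom[OF Y])
    have "eta P \<in> hom (Theta C) P (Go ?Y)" unfolding eta_def by (rule mk_hom[OF P GY h1])
    moreover have "is_iso (Theta C) (eta P)"
    proof (rule is_isoI)
      show "eta P \<in> hom (Theta C) P (Go ?Y)" unfolding eta_def by (rule mk_hom[OF P GY h1])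
      show "mk (Go ?Y) P (act_m C id e0 (c_id C ?Y)) \<in> hom (Theta C) (Go ?Y) P" by (rule mk_hom[OF GY P h2])
      show "c_comp (Theta C) (mk (Go ?Y) P (act_m C id e0 (c_id C ?Y))) (eta P) = c_id (Theta C) P"
        unfolding eta_def comp_mk[OF P GY P h1 h2] h21[OF Y] id_mk[OF P] ..
      show "c_comp (Theta C) (eta P) (mk (Go ?Y) P (act_m C id e0 (c_id C ?Y))) = c_id (Theta C) (Go ?Y)"
        unfolding eta_def comp_mk[OF GY P GY h2 h1] h12[OF Y] id_mk[OF GY] S_Go[OF Y] ..
    qed
    ultimately show "eta P \<in> hom (Theta C) P ((Go \<circ> S_obj \<phi> C) P) \<and> is_iso (Theta C) (eta P)" by simp
  qed
  show "\<forall>f\<in>c_arr (Theta C). c_comp (Theta C) ((Gm \<circ> S_arr \<phi> C) f) (eta (c_dom (Theta C) f)) =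
      c_comp (Theta C) (eta (c_cod (Theta C) f)) f"
  proof
    fix \<alpha> assume a: "\<alpha> \<in> c_arr (Theta C)"
    obtain P Q f where A: "\<alpha> = mk P Q f" "P \<in> theta_obj C" "Q \<in> theta_obj C" "f \<in> hom C (S_obj \<phi> C P) (S_obj \<phi> C Q)"
      "S_arr \<phi> C \<alpha> = f"
      using arr_cases[OF a] by metis
    let ?X = "S_obj \<phi> C P" and ?Y = "S_obj \<phi> C Q"
    have X: "?X \<in> c_obj C" and Y: "?Y \<in> c_obj C" using S_obj_ob A by auto
    have GX: "Go ?X \<in> theta_obj C" and GY: "Go ?Y \<in> theta_obj C" using Go_obj X Y by auto
    have fh: "f \<in> hom C ?X ?Y" by (rule A(4))
    have dc: "c_dom C f = ?X" "c_cod C f = ?Y" using fh by (simp_all add: hom_def)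
    have h1X: "act_m C e0 id (c_id C ?X) \<in> hom C (S_obj \<phi> C P) (S_obj \<phi> C (Go ?X))"
      unfolding S_Go[OF X] by (rule h1_hom[OF X])
    have h1Y: "act_m C e0 id (c_id C ?Y) \<in> hom C (S_obj \<phi> C Q) (S_obj \<phi> C (Go ?Y))"
      unfolding S_Go[OF Y] by (rule h1_hom[OF Y])
    have L: "c_comp C (act_m C e0 e0 f) (act_m C e0 id (c_id C ?X)) = act_m C e0 id f"
      using act_comp[OF inj_id' inj_e0 inj_e0 id_hom[OF X] fh] id_right[OF fh] by simp
    have R: "c_comp C (act_m C e0 id (c_id C ?Y)) f = act_m C e0 id f"
      using act_comp[OF inj_id' inj_id' inj_e0 fh id_hom[OF Y]] id_left[OF fh] act_m_id[of f] fh
      by (simp add: hom_def)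
    show "c_comp (Theta C) ((Gm \<circ> S_arr \<phi> C) \<alpha>) (eta (c_dom (Theta C) \<alpha>)) =
      c_comp (Theta C) (eta (c_cod (Theta C) \<alpha>)) \<alpha>"
      unfolding o_apply A(5) Theta_simps(3,4) unfolding A(1) mk_dom mk_cod Gm_def dc eta_def
        comp_mk[OF A(2) GX GY h1X Go_hom[OF fh]] comp_mk[OF A(2,3) GY fh h1Y] L R ..
  qed
qed

lemma eps_iso: "nat_iso C C (S_obj \<phi> C \<circ> Go) (S_arr \<phi> C \<circ> Gm) (\<lambda>X. X) (\<lambda>f. f) eps"
proof (rule nat_isoI)
  show "\<forall>X\<in>c_obj C. eps X \<in> hom C ((S_obj \<phi> C \<circ> Go) X) X \<and> is_iso C (eps X)"
  proof
    fix X assume X: "X \<in> c_obj C"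
    have "eps X \<in> hom C ((S_obj \<phi> C \<circ> Go) X) X" unfolding eps_def o_apply S_Go[OF X] by (rule h2_hom[OF X])
    moreover have "is_iso C (eps X)"
      unfolding eps_def by (rule is_isoI[OF h2_hom[OF X] h1_hom[OF X] h12[OF X] h21[OF X]])
    ultimately show "eps X \<in> hom C ((S_obj \<phi> C \<circ> Go) X) X \<and> is_iso C (eps X)" ..
  qed
  show "\<forall>f\<in>c_arr C. c_comp C f (eps (c_dom C f)) = c_comp C (eps (c_cod C f)) ((S_arr \<phi> C \<circ> Gm) f)"
  proof
    fix f assume f: "f \<in> c_arr C"
    let ?X = "c_dom C f" and ?Y = "c_cod C f"
    have fh: "f \<in> hom C ?X ?Y" using f by (simp add: hom_def)
    have X: "?X \<in> c_obj C" and Y: "?Y \<in> c_obj C" using arr_ob[OF fh] by auto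
    have SG: "S_arr \<phi> C (Gm f) = act_m C e0 e0 f"
      unfolding Gm_def by (rule mk_arr(2)[OF Go_obj[OF X] Go_obj[OF Y] Go_hom[OF fh]])
    have L: "c_comp C f (act_m C id e0 (c_id C ?X)) = act_m C id e0 f"
      using act_comp[OF inj_e0 inj_id' inj_id' id_hom[OF X] fh] id_right[OF fh] act_m_id[OF f] by simp
    have R: "c_comp C (act_m C id e0 (c_id C ?Y)) (act_m C e0 e0 f) = act_m C id e0 f"
      using act_comp[OF inj_e0 inj_e0 inj_id' fh id_hom[OF Y]] id_left[OF fh] by simp
    show "c_comp C f (eps ?X) = c_comp C (eps ?Y) ((S_arr \<phi> C \<circ> Gm) f)"
      unfolding eps_def o_apply SG L R ..
  qed
qed

lemma equivalence: "cat_equivalence (Theta C) C (S_obj \<phi> C) (S_arr \<phi> C)"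
  unfolding cat_equivalence_def using S_functor G_functor eta_iso eps_iso by blast

end


context PS
begin

lemma push_map:
  assumes F: "parsum_hom C D Fo Fm"
  shows "xs \<in> lists (c_obj C) \<Longrightarrow> inj_rep (length xs) \<psi> \<Longrightarrow> Fo (push C \<psi> xs) = push D \<psi> (map Fo xs)"
proof (induct xs arbitrary: \<psi>)
  case Nil then show ?case using parsum_homD3[OF F] by (simp add: push_Nil)
next
  case (Cons x xs)
  have x: "x \<in> c_obj C" and xs: "xs \<in> lists (c_obj C)" using Cons.prems by auto
  have ir: "inj_rep (Suc (length xs)) \<psi>" using Cons.prems by simp
  have r: "inj (row \<psi> 0)" using inj_rep_row ir by auto
  have d1: "disj C (act_o C (row \<psi> 0) x) (push C (sh \<psi>) xs)"
    by (rule good_disj[OF good_act[OF r x] good_push[OF xs inj_rep_sh[OF ir]] row_sh_disj[OF ir]])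
  have "Fo (push C \<psi> (x # xs)) = plus_o D (Fo (act_o C (row \<psi> 0) x)) (Fo (push C (sh \<psi>) xs))"
    unfolding push_Cons using parsum_homD4[OF F] act_ob[OF r x] push_ob[OF xs inj_rep_sh[OF ir]] d1 by blast
  also have "\<dots> = push D \<psi> (map Fo (x # xs))"
    unfolding Cons.hyps[OF xs inj_rep_sh[OF ir]] list.map push_Cons
    using parsum_homD2[OF F] r x by simp
  finally show ?case .
qed

end

context PSP
begin

lemma nz_map: "{i. Theta_obj_map Fo P i \<noteq> []} = {i. P i \<noteq> []}"
  by (simp add: Theta_obj_map_def)

lemma tens_map: "tens (Theta_obj_map Fo P) = map Fo (tens P)"
  unfolding tens_def nz_map by (simp add: Theta_obj_map_def map_concat o_def)

lemma theta_inj_map: "theta_inj \<phi> (Theta_obj_map Fo P) = theta_inj \<phi> P"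
  unfolding theta_inj_def nz_map ..

lemma nat_obj:
  assumes F: "parsum_hom C D Fo Fm" and P: "P \<in> theta_obj C"
  shows "S_obj \<phi> D (Theta_obj_map Fo P) = Fo (S_obj \<phi> C P)"
  unfolding S_obj_def tens_map theta_inj_map
  by (rule push_map[OF F tens_lists[OF P] theta_inj_rep[OF P], symmetric])

lemma nat_arr:
  assumes a: "\<alpha> \<in> c_arr (Theta C)"
  shows "S_arr \<phi> D (Theta_arr_map Fo Fm \<alpha>) = Fm (S_arr \<phi> C \<alpha>)"
proof -
  obtain P Q f where A: "\<alpha> = mk P Q f" "P \<in> theta_obj C" "Q \<in> theta_obj C" "f \<in> hom C (S_obj \<phi> C P) (S_obj \<phi> C Q)"
      "S_arr \<phi> C \<alpha> = f"
    using arr_cases[OF a] by metis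
  let ?c = "sig_cls C (tens P) (tens Q) (theta_inj \<phi> Q, f, theta_inj \<phi> P)"
  have xs: "tens P \<in> lists (c_obj C)" and ys: "tens Q \<in> lists (c_obj C)" using tens_lists A by auto
  have iP: "inj_rep (length (tens P)) (theta_inj \<phi> P)" and iQ: "inj_rep (length (tens Q)) (theta_inj \<phi> Q)"
    using theta_inj_rep A by auto
  have fh: "f \<in> hom C (push C (theta_inj \<phi> P) (tens P)) (push C (theta_inj \<phi> Q) (tens Q))"
    using A(4) by (simp add: S_obj_def)
  note Ts = T_self[OF xs ys iP iQ fh]
  have mem: "(theta_inj \<phi> Q, f, theta_inj \<phi> P) \<in> ?c" unfolding cls_mem Ts using iP iQ by simp
  have uniq: "f' = f" if "(theta_inj \<phi> Q, f', theta_inj \<phi> P) \<in> ?c" for f'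
    using that unfolding cls_mem Ts by simp
  have "S_arr \<phi> D (Theta_arr_map Fo Fm \<alpha>) =
      (THE g. (theta_inj \<phi> Q, g, theta_inj \<phi> P) \<in> (\<lambda>(\<psi>, f, \<phi>). (\<psi>, Fm f, \<phi>)) ` ?c)"
    unfolding A(1) mk_def Theta_arr_map_def prod.case by (simp add: S_arr_def theta_inj_map)
  also have "\<dots> = Fm f"
  proof (rule the_equality)
    show "(theta_inj \<phi> Q, Fm f, theta_inj \<phi> P) \<in> (\<lambda>(\<psi>, f, \<phi>). (\<psi>, Fm f, \<phi>)) ` ?c"
      using mem by force
  next
    fix g assume "(theta_inj \<phi> Q, g, theta_inj \<phi> P) \<in> (\<lambda>(\<psi>, f, \<phi>). (\<psi>, Fm f, \<phi>)) ` ?c"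
    then obtain \<psi>' f' \<phi>' where "(\<psi>', f', \<phi>') \<in> ?c" "(theta_inj \<phi> Q, g, theta_inj \<phi> P) = (\<psi>', Fm f', \<phi>')"
      by auto
    then show "g = Fm f" using uniq by auto
  qed
  finally show ?thesis using A(5) by simp
qed

end

theorem lemma3p23:
  fixes \<phi> :: "nat \<times> nat \<Rightarrow> nat"
    and C :: "('o, 'm) parsum"
  assumes "inj \<phi>"
    and "parsummable C"
  shows "cat_equivalence (Theta C) C (S_obj \<phi> C) (S_arr \<phi> C) \<and>
    (\<forall>(D :: ('p, 'n) parsum) Fo Fm. parsummable D \<and> parsum_hom C D Fo Fm \<longrightarrow>
       (\<forall>P\<in>c_obj (Theta C). S_obj \<phi> D (Theta_obj_map Fo P) = Fo (S_obj \<phi> C P)) \<and>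
       (\<forall>\<alpha>\<in>c_arr (Theta C). S_arr \<phi> D (Theta_arr_map Fo Fm \<alpha>) = Fm (S_arr \<phi> C \<alpha>)))"
proof -
  interpret PSP C \<phi> by unfold_locales (use assms in auto)
  show ?thesis
  proof (intro conjI allI impI)
    show "cat_equivalence (Theta C) C (S_obj \<phi> C) (S_arr \<phi> C)" by (rule equivalence)
  next
    fix D :: "('p, 'n) parsum" and Fo Fm
    assume h: "parsummable D \<and> parsum_hom C D Fo Fm"
    show "\<forall>P\<in>c_obj (Theta C). S_obj \<phi> D (Theta_obj_map Fo P) = Fo (S_obj \<phi> C P)"
      using nat_obj[OF conjunct2[OF h]] by (simp add: Theta_simps)
    show "\<forall>\<alpha>\<in>c_arr (Theta C). S_arr \<phi> D (Theta_arr_map Fo Fm \<alpha>) = Fm (S_arr \<phi> C \<alpha>)"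
      using nat_arr by blast
  qed
qed

end
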